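(* Let $(\mathcal X,\mathcal Y)$ be a nice couple and $G$ a group, and consider the PMQ-group pair $(G,G)$. Then $\mathrm{Id}_{\mathbb C}$ is a morphism of nice couples $(\mathcal X,\mathcal Y)\to(\mathcal X,\mathcal X)$, and the induced map $(\mathrm{Id}_{\mathbb C})_*:\mathrm{Hur}(\mathcal X,\mathcal Y;G,G)\to\mathrm{Hur}(\mathcal X,\mathcal X;G,G)$, $(P,\psi,\phi)\mapsto(P,\psi|_{\mathfrak Q_{(\mathcal X,\mathcal X)}(P)},\phi)$, is a homeomorphism.
   Context: Conventions: $*:=-\sqrt{-1}\in\mathbb C$ is the basepoint; $\mathbb H=\{z\in\mathbb C:\operatorname{Im}z\ge0\}$. A subset of $\mathbb C$ is semi-algebraic if it is a finite union of sets each defined by finitely many real polynomial equalities and (weak or strict) inequalities in $\operatorname{Re}z,\operatorname{Im}z$; a continuous map is semi-algebraic if its domain is a finite union of semi-algebraic pieces on each of which its coordinates are quotients of real polynomials. A nice couple is a pair $\mathfrak T=(\mathcal X,\mathcal Y)$ of semi-algebraic sets $\mathcal Y\subseteq\mathcal X\subseteq\mathbb H$ with $\mathcal Y$ closed in $\mathcal X$. A morphism of nice couples $(\mathcal X,\mathcal Y)\to(\mathcal X',\mathcal Y')$ is a continuous map $\xi:\mathbb C\to\mathbb C$ with $\xi( * )=*$ which is semi-algebraic, proper, induces the identity on $H^2_c(\mathbb C)$, satisfies $\xi(\mathcal X)\subseteq\mathcal X'$, $\xi(\mathcal Y)\subseteq\mathcal Y'$, has non-empty compact contractible fibres, and such that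 for $z\in\mathcal X'\setminus\mathcal Y'$ the fibre $\xi^{-1}(z)$ contains at most one point of $\mathcal X\setminus\mathcal Y$. PMQ-group pair $(G,G)$: the group $G$ regarded as a PMQ with everywhere defined product and conjugation $g^h=h^{-1}gh$, the map $\mathfrak e=\mathrm{Id}_G$, and $G$ acting on itself by right conjugation. Configurations: for a nice couple $\mathfrak T$ and finite $P\subset\mathcal X$, $\mathfrak G(P)=\pi_1(\mathbb C\setminus P,* )$; $\mathfrak Q_{\mathfrak T}(P)$ is $\{\mathbb1\}$ with the conjugacy classes of small clockwise simple loops around single points of $P\setminus\mathcal Y$; $\mathfrak Q^{\mathrm{ext}}(P)$ is the union of conjugacy classes of clockwise simple closed curves in $\mathbb C\setminus(P\cup\mathcal Y)$ bounding a disc in $\mathbb C\setminus\mathcal Y$; each of its elements $g$ is a product $g_1\cdots g_r$ of elements of $\mathfrak Q(P)$, and $\psi^{\mathrm{ext}}(g):=\psi(g_1)\cdots\psi(g_r)$ (here always defined since $G$ is complete). Hurwitz space: for a PMQ-group pair $(Q,G)$ (here $(G,G)$), $\mathrm{Hur}(\mathfrak T;Q,G)$ is the set of triples $(P,\psi,\phi)$, $P\subset\mathcal X$ finite, $\phi:\mathfrak G(P)\to G$ a homomorphism, $\psi:\mathfrak Q_{\mathfrak T}(P)\to Q$ with $\psi(\mathbb1)=\mathbb1$, $\mathfrak e\circ\psi=\phi|_{\mathfrak Q(P)}$ and $\psi(h^{-1}xh)=\psi(x)^{\phi(h)}$. Its topology has as basis the normal neighbourhoods $\mathfrak U(\mathfrak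 c;\underline U)$: for $\mathfrak c=(P,\psi,\phi)$, $P=\{z_1,\dots,z_k\}$, and an adapted covering $\underline U=(U_1,\dots,U_k)$ (convex semi-algebraic open subsets of $\mathbb C\setminus\{*\}$ with compact pairwise disjoint closures not containing $*$, $U_i\cap P=\{z_i\}$, $\overline{U_i}\cap\mathcal Y=\emptyset$ when $z_i\notin\mathcal Y$), it is the set of $(P',\psi',\phi')$ with $P'\subset\bigcup U_i$ meeting each $U_i$, $\phi'\circ\iota=\phi$ and $(\psi')^{\mathrm{ext}}\circ\iota=\psi$ on $\mathfrak Q(P)$, where $\iota:\mathfrak G(P)\cong\pi_1(\mathbb C\setminus\bigcup U_i,* )\to\mathfrak G(P')$ is induced by inclusions. We write $\mathrm{Hur}(\mathcal X,\mathcal Y;Q,G)=\mathrm{Hur}((\mathcal X,\mathcal Y);Q,G)$. *)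

theory Defs
  imports "HOL-Complex_Analysis.Complex_Analysis" "HOL-Homology.Homology"
begin

definition bp :: complex where "bp = - \<i>"

definition upper_half :: "complex set" where "upper_half = {z. Im z \<ge> 0}"

inductive_set polyfun :: "(real \<times> real \<Rightarrow> real) set" where
  pf_const: "(\<lambda>p. c) \<in> polyfun"
| pf_fst: "fst \<in> polyfun"
| pf_snd: "snd \<in> polyfun"
| pf_add: "f \<in> polyfun \<Longrightarrow> g \<in> polyfun \<Longrightarrow> (\<lambda>p. f p + g p) \<in> polyfun"
| pf_mult: "f \<in> polyfun \<Longrightarrow> g \<in> polyfun \<Longrightarrow> (\<lambda>p. f p * g p) \<in> polyfun"

definition basic_semialg :: "complex set \<Rightarrow> bool" where
  "basic_semialg A \<longleftrightarrow> (\<exists>Eq Le Lt. finite Eq \<and> finite Le \<and> finite Lt \<and>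
      Eq \<subseteq> polyfun \<and> Le \<subseteq> polyfun \<and> Lt \<subseteq> polyfun \<and>
      A = {z. (\<forall>f\<in>Eq. f (Re z, Im z) = 0) \<and> (\<forall>f\<in>Le. f (Re z, Im z) \<ge> 0)
              \<and> (\<forall>f\<in>Lt. f (Re z, Im z) > 0)})"

definition semialg :: "complex set \<Rightarrow> bool" where
  "semialg A \<longleftrightarrow> (\<exists>B. finite B \<and> (\<forall>S\<in>B. basic_semialg S) \<and> A = \<Union>B)"

definition semialg_map :: "(complex \<Rightarrow> complex) \<Rightarrow> bool" where
  "semialg_map \<xi> \<longleftrightarrow> (\<exists>Ps. finite Ps \<and> (\<forall>S\<in>Ps. semialg S) \<and> \<Union>Ps = UNIV \<and>
      (\<forall>S\<in>Ps. \<exists>p1 q1 p2 q2. p1 \<in> polyfun \<and> q1 \<in> polyfun \<and> p2 \<in> polyfun \<and> q2 \<in> polyfun \<and>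
         (\<forall>z\<in>S. q1 (Re z, Im z) \<noteq> 0 \<and> q2 (Re z, Im z) \<noteq> 0 \<and>
                 Re (\<xi> z) = p1 (Re z, Im z) / q1 (Re z, Im z) \<and>
                 Im (\<xi> z) = p2 (Re z, Im z) / q2 (Re z, Im z))))"

definition nice_couple :: "complex set \<Rightarrow> complex set \<Rightarrow> bool" where
  "nice_couple X Y \<longleftrightarrow> semialg X \<and> semialg Y \<and> Y \<subseteq> X \<and> X \<subseteq> upper_half \<and>
      closedin (top_of_set X) Y"

text \<open>Action on H^2_c(C): via the one-point compactification C^+ = S^2 (inverse
stereographic projection from the north pole), a proper map acts on H^2_c(C) = H^2(S^2)
by its Brouwer degree.\<close>

definition stereo :: "complex \<Rightarrow> nat \<Rightarrow> real" where
  "stereo z = (\<lambda>i. if i = 0 then 2 * Re z / (1 + (cmod z)\<^sup>2)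
                 else if i = 1 then 2 * Im z / (1 + (cmod z)\<^sup>2)
                 else if i = 2 then ((cmod z)\<^sup>2 - 1) / ((cmod z)\<^sup>2 + 1) else 0)"

definition north_pole :: "nat \<Rightarrow> real" where
  "north_pole = (\<lambda>i. if i = 2 then 1 else 0)"

definition unstereo :: "(nat \<Rightarrow> real) \<Rightarrow> complex" where
  "unstereo x = Complex (x 0 / (1 - x 2)) (x 1 / (1 - x 2))"

definition sphere_ext :: "(complex \<Rightarrow> complex) \<Rightarrow> (nat \<Rightarrow> real) \<Rightarrow> nat \<Rightarrow> real" where
  "sphere_ext \<xi> x = (if x 2 = 1 then north_pole else stereo (\<xi> (unstereo x)))"

definition nc_morphism ::
  "complex set \<Rightarrow> complex set \<Rightarrow> complex set \<Rightarrow> complex set \<Rightarrow> (complex \<Rightarrow> complex) \<Rightarrow> bool" where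
  "nc_morphism X Y X' Y' \<xi> \<longleftrightarrow>
     continuous_on UNIV \<xi> \<and> \<xi> bp = bp \<and> semialg_map \<xi> \<and>
     (\<forall>K. compact K \<longrightarrow> compact (\<xi> -` K)) \<and>
     Brouwer_degree2 2 (sphere_ext \<xi>) = 1 \<and>
     \<xi> ` X \<subseteq> X' \<and> \<xi> ` Y \<subseteq> Y' \<and>
     (\<forall>z. \<xi> -` {z} \<noteq> {} \<and> compact (\<xi> -` {z}) \<and> contractible (\<xi> -` {z})) \<and>
     (\<forall>z \<in> X' - Y'. \<forall>a b. a \<in> \<xi> -` {z} \<inter> (X - Y) \<and> b \<in> \<xi> -` {z} \<inter> (X - Y) \<longrightarrow> a = b)"

type_synonym cls = "(real \<Rightarrow> complex) set"

definition fund_grp :: "complex set \<Rightarrow> complex \<Rightarrow> cls monoid" where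
  "fund_grp S a = \<lparr>carrier = {{h. homotopic_paths S g h} | g.
         path g \<and> path_image g \<subseteq> S \<and> pathstart g = a \<and> pathfinish g = a},
     mult = (\<lambda>A B. {h. \<exists>g\<in>A. \<exists>g'\<in>B. homotopic_paths S (g +++ g') h}),
     one = {h. homotopic_paths S (linepath a a) h}\<rparr>"

definition Gpi :: "complex set \<Rightarrow> cls monoid" where
  "Gpi P = fund_grp (- P) bp"

text \<open>Conjugacy class of small clockwise simple loops around z (in pi_1(C - P, bp)).\<close>
definition small_loops :: "complex set \<Rightarrow> complex \<Rightarrow> cls set" where
  "small_loops P z = {{h. homotopic_paths (- P) (\<alpha> +++ reversepath (circlepath z r) +++ reversepath \<alpha>) h}
      | \<alpha> r. r > 0 \<and> cball z r \<inter> P = {z} \<and> path \<alpha> \<and> path_image \<alpha> \<subseteq> - P \<and>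
             pathstart \<alpha> = bp \<and> pathfinish \<alpha> = pathstart (reversepath (circlepath z r))}"

definition Qset :: "complex set \<Rightarrow> complex set \<Rightarrow> cls set" where
  "Qset Y P = {\<one>\<^bsub>Gpi P\<^esub>} \<union> \<Union>{small_loops P z | z. z \<in> P - Y}"

text \<open>Conjugacy classes of clockwise simple closed curves in C - (P u Y) bounding a disc in C - Y.\<close>
definition Qext :: "complex set \<Rightarrow> complex set \<Rightarrow> cls set" where
  "Qext Y P = {{h. homotopic_paths (- P) (\<alpha> +++ \<gamma> +++ reversepath \<alpha>) h} | \<alpha> \<gamma>.
      simple_path \<gamma> \<and> pathfinish \<gamma> = pathstart \<gamma> \<and> path_image \<gamma> \<subseteq> - (P \<union> Y) \<and>
      (\<forall>w \<in> inside (path_image \<gamma>). winding_number \<gamma> w = -1) \<and>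
      path_image \<gamma> \<union> inside (path_image \<gamma>) \<subseteq> - Y \<and>
      path \<alpha> \<and> path_image \<alpha> \<subseteq> - P \<and> pathstart \<alpha> = bp \<and> pathfinish \<alpha> = pathstart \<gamma>}"

definition psi_ext :: "('g, 'b) monoid_scheme \<Rightarrow> complex set \<Rightarrow> complex set \<Rightarrow> (cls \<Rightarrow> 'g) \<Rightarrow> cls \<Rightarrow> 'g" where
  "psi_ext G Y P \<psi> g = (SOME x. \<exists>gs. set gs \<subseteq> Qset Y P \<and>
       g = foldr (\<lambda>a b. a \<otimes>\<^bsub>Gpi P\<^esub> b) gs \<one>\<^bsub>Gpi P\<^esub> \<and>
       x = foldr (\<lambda>a b. \<psi> a \<otimes>\<^bsub>G\<^esub> b) gs \<one>\<^bsub>G\<^esub>)"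

type_synonym 'g config = "complex set \<times> (cls \<Rightarrow> 'g) \<times> (cls \<Rightarrow> 'g)"

definition Hur :: "complex set \<Rightarrow> complex set \<Rightarrow> ('g, 'b) monoid_scheme \<Rightarrow> 'g config set" where
  "Hur X Y G = {(P, \<psi>, \<phi>). finite P \<and> P \<subseteq> X \<and>
      \<phi> \<in> hom (Gpi P) G \<and> \<phi> \<in> extensional (carrier (Gpi P)) \<and>
      \<psi> \<in> Qset Y P \<rightarrow> carrier G \<and> \<psi> \<in> extensional (Qset Y P) \<and>
      \<psi> \<one>\<^bsub>Gpi P\<^esub> = \<one>\<^bsub>G\<^esub> \<and>
      (\<forall>x \<in> Qset Y P. \<psi> x = \<phi> x) \<and>
      (\<forall>x \<in> Qset Y P. \<forall>h \<in> carrier (Gpi P).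
          \<psi> (inv\<^bsub>Gpi P\<^esub> h \<otimes>\<^bsub>Gpi P\<^esub> x \<otimes>\<^bsub>Gpi P\<^esub> h) = inv\<^bsub>G\<^esub> (\<phi> h) \<otimes>\<^bsub>G\<^esub> \<psi> x \<otimes>\<^bsub>G\<^esub> \<phi> h)}"

definition adapted :: "complex set \<Rightarrow> complex set \<Rightarrow> (complex \<Rightarrow> complex set) \<Rightarrow> bool" where
  "adapted Y P U \<longleftrightarrow> (\<forall>z \<in> P. convex (U z) \<and> open (U z) \<and> semialg (U z) \<and>
      compact (closure (U z)) \<and> bp \<notin> closure (U z) \<and> U z \<inter> P = {z} \<and>
      (z \<notin> Y \<longrightarrow> closure (U z) \<inter> Y = {}) \<and>
      (\<forall>z' \<in> P. z' \<noteq> z \<longrightarrow> closure (U z) \<inter> closure (U z') = {}))"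

text \<open>iota : G(P) = pi_1(C - U U_i) -> G(P'), induced by inclusions.\<close>
definition iota :: "(complex \<Rightarrow> complex set) \<Rightarrow> complex set \<Rightarrow> complex set \<Rightarrow> cls \<Rightarrow> cls" where
  "iota U P P' A = {h. \<exists>g \<in> A. path_image g \<subseteq> - (\<Union>(U ` P)) \<and> homotopic_paths (- P') g h}"

definition normal_nbhd ::
  "complex set \<Rightarrow> complex set \<Rightarrow> ('g, 'b) monoid_scheme \<Rightarrow> 'g config \<Rightarrow> (complex \<Rightarrow> complex set) \<Rightarrow> 'g config set" where
  "normal_nbhd X Y G c U = (case c of (P, \<psi>, \<phi>) \<Rightarrow>
     {(P', \<psi>', \<phi>') \<in> Hur X Y G. P' \<subseteq> \<Union>(U ` P) \<and> (\<forall>z \<in> P. P' \<inter> U z \<noteq> {}) \<and>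
        (\<forall>x \<in> carrier (Gpi P). \<phi>' (iota U P P' x) = \<phi> x) \<and>
        (\<forall>x \<in> Qset Y P. psi_ext G Y P' \<psi>' (iota U P P' x) = \<psi> x)})"

definition Hur_top :: "complex set \<Rightarrow> complex set \<Rightarrow> ('g, 'b) monoid_scheme \<Rightarrow> 'g config topology" where
  "Hur_top X Y G = topology_generated_by
     {normal_nbhd X Y G c U | c U. c \<in> Hur X Y G \<and> adapted Y (fst c) U}"

end

theory Submission
  imports Defs
begin

lemma basic_semialg_UNIV: "basic_semialg UNIV"
  unfolding basic_semialg_def by (rule exI[of _ "{}"])+ auto

lemma semialg_UNIV: "semialg UNIV"
  unfolding semialg_def using basic_semialg_UNIV by (intro exI[of _ "{UNIV}"]) auto

lemma semialg_map_id: "semialg_map (\<lambda>z. z)"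
  unfolding semialg_map_def
  apply (rule exI[of _ "{UNIV}"])
  apply (simp add: semialg_UNIV)
  apply (rule exI[of _ fst], rule conjI, rule polyfun.pf_fst)
  apply (rule exI[of _ "\<lambda>p. 1"], rule conjI, rule polyfun.pf_const)
  apply (rule exI[of _ snd], rule conjI, rule polyfun.pf_snd)
  apply (rule exI[of _ "\<lambda>p. 1"], rule conjI, rule polyfun.pf_const)
  by simp

lemma sphere_ext_id:
  assumes "x \<in> topspace (nsphere 2)"
  shows "sphere_ext (\<lambda>z. z) x = id x"
proof -
  have s: "x 0 ^ 2 + x 1 ^ 2 + x 2 ^ 2 = 1" and z: "\<And>i. i > 2 \<Longrightarrow> x i = 0"
    using assms by (auto simp: nsphere numeral_2_eq_2 atMost_Suc)
  show ?thesis
  proof (cases "x 2 = 1")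
    case True
    then have "x 0 ^ 2 + x 1 ^ 2 = 0" using s by simp
    then have "x 0 = 0" "x 1 = 0" by (auto simp: add_nonneg_eq_0_iff)
    then show ?thesis using True z
      by (auto simp: sphere_ext_def north_pole_def fun_eq_iff)
        (metis One_nat_def Suc_1 less_2_cases_iff linorder_neqE_nat)
  next
    case False
    define d where "d = 1 - x 2"
    have d: "d \<noteq> 0" using False by (simp add: d_def)
    have m: "(cmod (unstereo x))\<^sup>2 = (x 0 ^ 2 + x 1 ^ 2) / d ^ 2"
      by (simp add: unstereo_def cmod_def d_def power_divide add_divide_distrib)
    have e: "x 0 ^ 2 + x 1 ^ 2 = (1 - x 2) * (1 + x 2)" using s by (simp add: algebra_simps power2_eq_square)
    have m2: "(cmod (unstereo x))\<^sup>2 = (1 + x 2) / d"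
      using m e d by (simp add: d_def power2_eq_square)
    have q1: "1 + (cmod (unstereo x))\<^sup>2 = 2 / d"
      using m2 d by (simp add: d_def field_simps)
    have q2: "(cmod (unstereo x))\<^sup>2 - 1 = 2 * x 2 / d"
      using m2 d by (simp add: d_def field_simps)
    have q3: "(cmod (unstereo x))\<^sup>2 + 1 = 2 / d"
      using q1 by simp
    show ?thesis
    proof (rule ext)
      fix i :: nat
      consider "i = 0" | "i = 1" | "i = 2" | "i > 2" by linarith
      then show "sphere_ext (\<lambda>z. z) x i = id x i"
      proof cases
        case 1 then show ?thesis using False d
          by (simp add: sphere_ext_def stereo_def q1) (simp add: unstereo_def d_def field_simps)
      next
        case 2 then show ?thesis using False d
          by (simp add: sphere_ext_def stereo_def q1) (simp add: unstereo_def d_def field_simps)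
      next
        case 3 then show ?thesis using False d
          by (simp add: sphere_ext_def stereo_def q2 q3)
      next
        case 4 then show ?thesis using False z by (simp add: sphere_ext_def stereo_def)
      qed
    qed
  qed
qed

lemma degree_id_ext: "Brouwer_degree2 2 (sphere_ext (\<lambda>z. z)) = 1"
proof -
  have "Brouwer_degree2 2 (sphere_ext (\<lambda>z. z)) = Brouwer_degree2 2 id"
    by (rule Brouwer_degree2_eq) (rule sphere_ext_id)
  then show ?thesis by simp
qed

lemma nc_morphism_id:
  assumes "nice_couple X Y"
  shows "nc_morphism X Y X X (\<lambda>z. z)"
  unfolding nc_morphism_def
  using assms
  by (auto simp: semialg_map_id degree_id_ext nice_couple_def vimage_def)

definition cls :: "complex set \<Rightarrow> (real \<Rightarrow> complex) \<Rightarrow> cls" where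
  "cls T g = {h. homotopic_paths (- T) g h}"

definition loopat :: "complex set \<Rightarrow> (real \<Rightarrow> complex) \<Rightarrow> bool" where
  "loopat T g \<longleftrightarrow> path g \<and> path_image g \<subseteq> - T \<and> pathstart g = bp \<and> pathfinish g = bp"

lemma carrier_Gpi: "carrier (Gpi T) = {cls T g | g. loopat T g}"
  by (auto simp: Gpi_def fund_grp_def cls_def loopat_def)

lemma one_Gpi: "\<one>\<^bsub>Gpi T\<^esub> = cls T (linepath bp bp)"
  by (simp add: Gpi_def fund_grp_def cls_def)

lemma cls_eq_iff:
  assumes "path g" "path_image g \<subseteq> - T"
  shows "cls T g = cls T g' \<longleftrightarrow> homotopic_paths (- T) g g'"
proof
  assume "cls T g = cls T g'"
  moreover have "g' \<in> cls T g'" if "homotopic_paths (- T) g g'"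
    using that unfolding cls_def by (metis homotopic_paths_imp_path homotopic_paths_imp_subset homotopic_paths_refl mem_Collect_eq)
  moreover have "g \<in> cls T g" using assms by (simp add: cls_def homotopic_paths_refl)
  ultimately show "homotopic_paths (- T) g g'"
    by (simp add: cls_def) (meson homotopic_paths_sym)
next
  assume "homotopic_paths (- T) g g'"
  then show "cls T g = cls T g'"
    unfolding cls_def by (auto intro: homotopic_paths_trans homotopic_paths_sym)
qed

lemma cls_eqI: "homotopic_paths (- T) g g' \<Longrightarrow> cls T g = cls T g'"
  unfolding cls_def by (auto intro: homotopic_paths_trans homotopic_paths_sym)

lemma mem_cls: "h \<in> cls T g \<longleftrightarrow> homotopic_paths (- T) g h"
  by (simp add: cls_def)

lemma self_mem_cls: "path g \<Longrightarrow> path_image g \<subseteq> - T \<Longrightarrow> g \<in> cls T g"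
  by (simp add: cls_def homotopic_paths_refl)

lemma mult_Gpi:
  assumes "pathfinish g = pathstart g'" "path g" "path g'" "path_image g \<subseteq> - T" "path_image g' \<subseteq> - T"
  shows "cls T g \<otimes>\<^bsub>Gpi T\<^esub> cls T g' = cls T (g +++ g')"
proof -
  have "{h. \<exists>a\<in>cls T g. \<exists>b\<in>cls T g'. homotopic_paths (- T) (a +++ b) h} = cls T (g +++ g')"
  proof (intro equalityI subsetI)
    fix h assume "h \<in> {h. \<exists>a\<in>cls T g. \<exists>b\<in>cls T g'. homotopic_paths (- T) (a +++ b) h}"
    then obtain a b where a: "homotopic_paths (- T) g a" and b: "homotopic_paths (- T) g' b"
      and h: "homotopic_paths (- T) (a +++ b) h" by (auto simp: cls_def)
    have "homotopic_paths (- T) (g +++ g') (a +++ b)"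
      using a b assms by (intro homotopic_paths_join) auto
    then show "h \<in> cls T (g +++ g')" using h by (auto simp: cls_def intro: homotopic_paths_trans)
  next
    fix h assume "h \<in> cls T (g +++ g')"
    then show "h \<in> {h. \<exists>a\<in>cls T g. \<exists>b\<in>cls T g'. homotopic_paths (- T) (a +++ b) h}"
    proof -
      have "homotopic_paths (- T) g g" "homotopic_paths (- T) g' g'"
        using assms by (auto intro: homotopic_paths_refl)
      then show ?thesis using \<open>h \<in> cls T (g +++ g')\<close> unfolding cls_def mem_Collect_eq by blast
    qed
  qed
  then show ?thesis by (simp add: Gpi_def fund_grp_def)
qed

lemma loopat_join: "loopat T g \<Longrightarrow> loopat T g' \<Longrightarrow> loopat T (g +++ g')"
  by (auto simp: loopat_def path_image_join)

lemma loopat_rev: "loopat T g \<Longrightarrow> loopat T (reversepath g)"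
  by (auto simp: loopat_def)

lemma loopat_one: "bp \<notin> T \<Longrightarrow> loopat T (linepath bp bp)"
  by (auto simp: loopat_def)

lemma bp_notin_upper: "bp \<notin> upper_half"
  by (simp add: bp_def upper_half_def)

lemma group_Gpi: assumes bpT: "bp \<notin> T" shows "group (Gpi T)"
proof (rule groupI)
  fix x y assume "x \<in> carrier (Gpi T)" "y \<in> carrier (Gpi T)"
  then obtain g g' where "x = cls T g" "y = cls T g'" "loopat T g" "loopat T g'"
    by (auto simp: carrier_Gpi)
  moreover have "cls T g \<otimes>\<^bsub>Gpi T\<^esub> cls T g' = cls T (g +++ g')"
    using \<open>loopat T g\<close> \<open>loopat T g'\<close> by (intro mult_Gpi) (auto simp: loopat_def)
  ultimately show "x \<otimes>\<^bsub>Gpi T\<^esub> y \<in> carrier (Gpi T)"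
    unfolding carrier_Gpi using loopat_join by blast
next
  show "\<one>\<^bsub>Gpi T\<^esub> \<in> carrier (Gpi T)"
    using loopat_one bpT by (auto simp: carrier_Gpi one_Gpi)
next
  fix x y z assume "x \<in> carrier (Gpi T)" "y \<in> carrier (Gpi T)" "z \<in> carrier (Gpi T)"
  then obtain a b c where "x = cls T a" "y = cls T b" "z = cls T c" "loopat T a" "loopat T b" "loopat T c"
    by (auto simp: carrier_Gpi)
  then show "x \<otimes>\<^bsub>Gpi T\<^esub> y \<otimes>\<^bsub>Gpi T\<^esub> z = x \<otimes>\<^bsub>Gpi T\<^esub> (y \<otimes>\<^bsub>Gpi T\<^esub> z)"
    by (auto simp: mult_Gpi loopat_def path_image_join intro!: cls_eqI homotopic_paths_sym[OF homotopic_paths_assoc])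
next
  fix x assume "x \<in> carrier (Gpi T)"
  then obtain a where "x = cls T a" "loopat T a" by (auto simp: carrier_Gpi)
  then show "\<one>\<^bsub>Gpi T\<^esub> \<otimes>\<^bsub>Gpi T\<^esub> x = x"
    using bpT by (auto simp: one_Gpi loopat_def mult_Gpi[of "linepath bp bp" a] intro!: cls_eqI homotopic_paths_lid')
next
  fix x assume "x \<in> carrier (Gpi T)"
  then obtain a where a: "x = cls T a" "loopat T a" by (auto simp: carrier_Gpi)
  show "\<exists>y\<in>carrier (Gpi T). y \<otimes>\<^bsub>Gpi T\<^esub> x = \<one>\<^bsub>Gpi T\<^esub>"
  proof (intro bexI)
    show "cls T (reversepath a) \<in> carrier (Gpi T)"
      using a loopat_rev by (auto simp: carrier_Gpi)
    show "cls T (reversepath a) \<otimes>\<^bsub>Gpi T\<^esub> x = \<one>\<^bsub>Gpi T\<^esub>"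
      using a homotopic_paths_linv[of a "- T"]
      by (auto simp: one_Gpi mult_Gpi[of "reversepath a" a] loopat_def intro!: cls_eqI)
  qed
qed

lemma inv_Gpi:
  assumes "loopat T a" "bp \<notin> T"
  shows "inv\<^bsub>Gpi T\<^esub> (cls T a) = cls T (reversepath a)"
proof -
  interpret group "Gpi T" by (rule group_Gpi) (use assms in auto)
  have c: "cls T a \<in> carrier (Gpi T)" "cls T (reversepath a) \<in> carrier (Gpi T)"
    using assms loopat_rev by (auto simp: carrier_Gpi)
  have "cls T (reversepath a) \<otimes>\<^bsub>Gpi T\<^esub> cls T a = \<one>\<^bsub>Gpi T\<^esub>"
    using assms homotopic_paths_linv[of a "- T"]
    by (auto simp: one_Gpi mult_Gpi[of "reversepath a" a] loopat_def intro!: cls_eqI)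
  then show ?thesis using c by (simp add: inv_equality)
qed

definition pin :: "complex set \<Rightarrow> (real \<Rightarrow> complex) \<Rightarrow> bool" where
  "pin S p \<longleftrightarrow> path p \<and> path_image p \<subseteq> S"

lemma pin_join[intro]: "pin S p \<Longrightarrow> pin S q \<Longrightarrow> pathfinish p = pathstart q \<Longrightarrow> pin S (p +++ q)"
  by (auto simp: pin_def path_image_join)

lemma pin_rev[intro]: "pin S p \<Longrightarrow> pin S (reversepath p)"
  by (auto simp: pin_def)

lemma hp_refl: "pin S p \<Longrightarrow> homotopic_paths S p p"
  by (simp add: pin_def homotopic_paths_refl)

lemma hp_assoc_l: "pin S p \<Longrightarrow> pin S q \<Longrightarrow> pin S r \<Longrightarrow> pathfinish p = pathstart q \<Longrightarrow>
   pathfinish q = pathstart r \<Longrightarrow> homotopic_paths S (p +++ (q +++ r)) ((p +++ q) +++ r)"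
  by (simp add: pin_def homotopic_paths_assoc)

lemma hp_assoc_r: "pin S p \<Longrightarrow> pin S q \<Longrightarrow> pin S r \<Longrightarrow> pathfinish p = pathstart q \<Longrightarrow>
   pathfinish q = pathstart r \<Longrightarrow> homotopic_paths S ((p +++ q) +++ r) (p +++ (q +++ r))"
  by (simp add: pin_def homotopic_paths_assoc homotopic_paths_sym)

lemma hp_join: "homotopic_paths S p p' \<Longrightarrow> homotopic_paths S q q' \<Longrightarrow> pathfinish p = pathstart q \<Longrightarrow>
   homotopic_paths S (p +++ q) (p' +++ q')"
  by (rule homotopic_paths_join)

lemma hp_joinl: "homotopic_paths S p p' \<Longrightarrow> pin S q \<Longrightarrow> pathfinish p = pathstart q \<Longrightarrow>
   homotopic_paths S (p +++ q) (p' +++ q)"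
  by (rule homotopic_paths_join) (auto intro: hp_refl simp: pin_def)

lemma hp_joinr: "pin S p \<Longrightarrow> homotopic_paths S q q' \<Longrightarrow> pathfinish p = pathstart q \<Longrightarrow>
   homotopic_paths S (p +++ q) (p +++ q')"
  by (rule homotopic_paths_join) (auto intro: hp_refl simp: pin_def)

lemma hp_trans: "homotopic_paths S p q \<Longrightarrow> homotopic_paths S q r \<Longrightarrow> homotopic_paths S p r"
  by (rule homotopic_paths_trans)

lemma hp_imp_pin: "homotopic_paths S p q \<Longrightarrow> pin S p \<and> pin S q"
  by (simp add: pin_def homotopic_paths_imp_path homotopic_paths_imp_subset)

lemma hp_ends: "homotopic_paths S p q \<Longrightarrow> pathstart q = pathstart p \<and> pathfinish q = pathfinish p"
  by (metis homotopic_paths_imp_pathstart homotopic_paths_imp_pathfinish)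

lemma hp_conj_rearr:
  assumes "pin S a" "pin S b" "pin S c" "pin S d" "pin S e"
    "pathfinish a = pathstart b" "pathfinish b = pathstart c" "pathfinish c = pathstart d"
    "pathfinish d = pathstart e"
  shows "homotopic_paths S ((a +++ (b +++ (c +++ d))) +++ e) ((a +++ b) +++ (c +++ (d +++ e)))"
proof -
  have 1: "homotopic_paths S ((a +++ (b +++ (c +++ d))) +++ e) (a +++ ((b +++ (c +++ d)) +++ e))"
    using assms by (intro hp_assoc_r) auto
  have 2: "homotopic_paths S ((b +++ (c +++ d)) +++ e) (b +++ ((c +++ d) +++ e))"
    using assms by (intro hp_assoc_r) auto
  have 3: "homotopic_paths S ((c +++ d) +++ e) (c +++ (d +++ e))"
    using assms by (intro hp_assoc_r) auto
  have 4: "homotopic_paths S (b +++ ((c +++ d) +++ e)) (b +++ (c +++ (d +++ e)))"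
    using assms 3 by (intro hp_joinr) auto
  have 5: "homotopic_paths S (a +++ ((b +++ (c +++ d)) +++ e)) (a +++ (b +++ (c +++ (d +++ e))))"
    using assms 2 4 by (intro hp_joinr) (auto intro: hp_trans)
  have 6: "homotopic_paths S (a +++ (b +++ (c +++ (d +++ e)))) ((a +++ b) +++ (c +++ (d +++ e)))"
    using assms by (intro hp_assoc_l) auto
  show ?thesis using 1 5 6 by (blast intro: hp_trans)
qed

lemma sphere_inter_P: "r > 0 \<Longrightarrow> cball z r \<inter> P = {z} \<Longrightarrow> sphere z r \<inter> P = {}"
proof (rule ccontr)
  assume "r > 0" "cball z r \<inter> P = {z}" "sphere z r \<inter> P \<noteq> {}"
  then obtain x where "x \<in> sphere z r" "x \<in> P" by blast
  then have "x \<in> cball z r \<inter> P" by auto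
  then have "x = z" using \<open>cball z r \<inter> P = {z}\<close> by blast
  then show False using \<open>x \<in> sphere z r\<close> \<open>r > 0\<close> by simp
qed

lemma small_loop_loopat:
  assumes "r > 0" "cball z r \<inter> P = {z}" "path \<alpha>" "path_image \<alpha> \<subseteq> - P" "pathstart \<alpha> = bp"
    "pathfinish \<alpha> = pathstart (reversepath (circlepath z r))"
  shows "loopat P (\<alpha> +++ reversepath (circlepath z r) +++ reversepath \<alpha>)"
proof -
  have "sphere z r \<inter> P = {}" using sphere_inter_P[OF assms(1,2)] .
  then show ?thesis using assms by (auto simp: loopat_def path_image_join)
qed

lemma small_loops_carrier: "small_loops P z \<subseteq> carrier (Gpi P)"
  unfolding small_loops_def carrier_Gpi cls_def[symmetric] using small_loop_loopat by blast

lemma Qset_carrier: "bp \<notin> P \<Longrightarrow> Qset Y P \<subseteq> carrier (Gpi P)"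
  unfolding Qset_def using small_loops_carrier monoid.one_closed[OF group.is_monoid[OF group_Gpi]] by blast

lemma small_loops_conj:
  assumes "bp \<notin> P" "s \<in> small_loops P z" "h \<in> carrier (Gpi P)"
  shows "inv\<^bsub>Gpi P\<^esub> h \<otimes>\<^bsub>Gpi P\<^esub> s \<otimes>\<^bsub>Gpi P\<^esub> h \<in> small_loops P z"
proof -
  obtain \<alpha> r where s: "s = cls P (\<alpha> +++ reversepath (circlepath z r) +++ reversepath \<alpha>)"
    and r: "r > 0" "cball z r \<inter> P = {z}" and a: "path \<alpha>" "path_image \<alpha> \<subseteq> - P" "pathstart \<alpha> = bp"
      "pathfinish \<alpha> = pathstart (reversepath (circlepath z r))"
    using assms(2) unfolding small_loops_def cls_def by blast
  obtain k where h: "h = cls P k" "loopat P k" using assms(3) by (auto simp: carrier_Gpi)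
  define c where "c = reversepath (circlepath z r)"
  have sph: "sphere z r \<inter> P = {}" using sphere_inter_P[OF r] .
  have pc: "pin (- P) c" using sph r by (auto simp: pin_def c_def)
  have pa: "pin (- P) \<alpha>" using a by (simp add: pin_def)
  have pk: "pin (- P) k" using h by (simp add: pin_def loopat_def)
  have ln: "loopat P (\<alpha> +++ c +++ reversepath \<alpha>)"
    unfolding c_def by (rule small_loop_loopat) (use r a in auto)
  have "inv\<^bsub>Gpi P\<^esub> h \<otimes>\<^bsub>Gpi P\<^esub> s \<otimes>\<^bsub>Gpi P\<^esub> h
      = cls P ((reversepath k +++ (\<alpha> +++ c +++ reversepath \<alpha>)) +++ k)"
    using h ln assms(1) a unfolding s c_def[symmetric]
    by (simp add: inv_Gpi mult_Gpi loopat_def path_image_join)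
  also have "\<dots> = cls P ((reversepath k +++ \<alpha>) +++ c +++ reversepath (reversepath k +++ \<alpha>))"
    apply (rule cls_eqI)
    using hp_conj_rearr[of "- P" "reversepath k" \<alpha> c "reversepath \<alpha>" k] pa pc pk a h
    by (auto simp: reversepath_joinpaths loopat_def c_def)
  finally show ?thesis
    unfolding small_loops_def cls_def[symmetric] c_def
    using r a h pk by (intro CollectI exI[of _ "reversepath k +++ \<alpha>"] exI[of _ r])
      (auto simp: loopat_def path_image_join)
qed

lemma Qset_conj:
  assumes "bp \<notin> P" "x \<in> Qset Y P" "h \<in> carrier (Gpi P)"
  shows "inv\<^bsub>Gpi P\<^esub> h \<otimes>\<^bsub>Gpi P\<^esub> x \<otimes>\<^bsub>Gpi P\<^esub> h \<in> Qset Y P"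
proof -
  interpret group "Gpi P" using group_Gpi assms(1) .
  show ?thesis using assms small_loops_conj[of P x _ h] unfolding Qset_def by auto
qed

definition Mset :: "complex set \<Rightarrow> complex set \<Rightarrow> cls set" where
  "Mset Y P = {foldr (\<lambda>a b. a \<otimes>\<^bsub>Gpi P\<^esub> b) gs \<one>\<^bsub>Gpi P\<^esub> | gs. set gs \<subseteq> Qset Y P}"

lemma foldr_closed:
  assumes "bp \<notin> P" "set gs \<subseteq> carrier (Gpi P)"
  shows "foldr (\<lambda>a b. a \<otimes>\<^bsub>Gpi P\<^esub> b) gs \<one>\<^bsub>Gpi P\<^esub> \<in> carrier (Gpi P)"
proof -
  interpret group "Gpi P" using group_Gpi assms(1) .
  show ?thesis using assms(2) by (induction gs) auto
qed

lemma foldr_hom: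
  assumes "bp \<notin> P" "group G" "\<phi> \<in> hom (Gpi P) G" "set gs \<subseteq> carrier (Gpi P)"
  shows "\<phi> (foldr (\<lambda>a b. a \<otimes>\<^bsub>Gpi P\<^esub> b) gs \<one>\<^bsub>Gpi P\<^esub>) = foldr (\<lambda>a b. \<phi> a \<otimes>\<^bsub>G\<^esub> b) gs \<one>\<^bsub>G\<^esub>"
  using assms(4)
proof (induction gs)
  case Nil
  then show ?case using hom_one[OF assms(3) group_Gpi[OF assms(1)] assms(2)] by simp
next
  case (Cons a gs)
  then show ?case using foldr_closed[OF assms(1), of gs] assms(3)
    by (simp add: hom_mult)
qed

lemma Mset_carrier: "bp \<notin> P \<Longrightarrow> Mset Y P \<subseteq> carrier (Gpi P)"
  unfolding Mset_def using foldr_closed Qset_carrier by blast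

lemma psi_ext_eq:
  assumes "bp \<notin> P" "group G" "\<phi> \<in> hom (Gpi P) G" "\<forall>x\<in>Qset Y P. \<psi> x = \<phi> x"
  shows "psi_ext G Y P \<psi> y = (if y \<in> Mset Y P then \<phi> y else (SOME x. False))"
proof (cases "y \<in> Mset Y P")
  case True
  have key: "x = \<phi> y" if "set gs \<subseteq> Qset Y P" "y = foldr (\<lambda>a b. a \<otimes>\<^bsub>Gpi P\<^esub> b) gs \<one>\<^bsub>Gpi P\<^esub>"
     "x = foldr (\<lambda>a b. \<psi> a \<otimes>\<^bsub>G\<^esub> b) gs \<one>\<^bsub>G\<^esub>" for x gs
  proof -
    have "foldr (\<lambda>a b. \<psi> a \<otimes>\<^bsub>G\<^esub> b) gs \<one>\<^bsub>G\<^esub> = foldr (\<lambda>a b. \<phi> a \<otimes>\<^bsub>G\<^esub> b) gs \<one>\<^bsub>G\<^esub>"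
      using that(1) assms(4) by (induction gs) auto
    moreover have "set gs \<subseteq> carrier (Gpi P)" using that(1) Qset_carrier[OF assms(1)] by blast
    ultimately show ?thesis using that foldr_hom[OF assms(1-3), of gs] by simp
  qed
  from True obtain gs where gs: "set gs \<subseteq> Qset Y P" "y = foldr (\<lambda>a b. a \<otimes>\<^bsub>Gpi P\<^esub> b) gs \<one>\<^bsub>Gpi P\<^esub>"
    by (auto simp: Mset_def)
  have "psi_ext G Y P \<psi> y = \<phi> y"
    unfolding psi_ext_def
    apply (rule someI2[where a = "foldr (\<lambda>a b. \<psi> a \<otimes>\<^bsub>G\<^esub> b) gs \<one>\<^bsub>G\<^esub>"])
    using gs key by blast+
  then show ?thesis using True by simp
next
  case False
  then have "(\<lambda>x. \<exists>gs. set gs \<subseteq> Qset Y P \<and> y = foldr (\<lambda>a b. a \<otimes>\<^bsub>Gpi P\<^esub> b) gs \<one>\<^bsub>Gpi P\<^esub> \<and>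
       x = foldr (\<lambda>a b. \<psi> a \<otimes>\<^bsub>G\<^esub> b) gs \<one>\<^bsub>G\<^esub>) = (\<lambda>x. False)"
    by (auto simp: Mset_def)
  then show ?thesis using False by (simp add: psi_ext_def)
qed

lemma Mset_one: "\<one>\<^bsub>Gpi P\<^esub> \<in> Mset Y P"
  unfolding Mset_def by (auto intro!: exI[of _ "[]"])

lemma Mset_single: "bp \<notin> P \<Longrightarrow> x \<in> Qset Y P \<Longrightarrow> x \<in> Mset Y P"
  unfolding Mset_def using Qset_carrier[of P Y] group.is_monoid[OF group_Gpi]
  by (auto intro!: exI[of _ "[x]"] simp: monoid.r_one)

lemma Mset_mult:
  assumes "bp \<notin> P" "x \<in> Mset Y P" "y \<in> Mset Y P"
  shows "x \<otimes>\<^bsub>Gpi P\<^esub> y \<in> Mset Y P"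
proof -
  interpret group "Gpi P" using group_Gpi assms(1) .
  obtain gs hs where g: "set gs \<subseteq> Qset Y P" "x = foldr (\<lambda>a b. a \<otimes>\<^bsub>Gpi P\<^esub> b) gs \<one>\<^bsub>Gpi P\<^esub>"
    and h: "set hs \<subseteq> Qset Y P" "y = foldr (\<lambda>a b. a \<otimes>\<^bsub>Gpi P\<^esub> b) hs \<one>\<^bsub>Gpi P\<^esub>"
    using assms by (auto simp: Mset_def)
  have yc: "y \<in> carrier (Gpi P)" using assms Mset_carrier by blast
  have "foldr (\<lambda>a b. a \<otimes>\<^bsub>Gpi P\<^esub> b) gs y = x \<otimes>\<^bsub>Gpi P\<^esub> y"
    using g(1) yc unfolding g(2)
  proof (induction gs)
    case Nil then show ?case by simp
  next
    case (Cons a gs)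
    have "a \<in> carrier (Gpi P)" using Cons.prems Qset_carrier[OF assms(1)] by auto
    moreover have "foldr (\<lambda>a b. a \<otimes>\<^bsub>Gpi P\<^esub> b) gs \<one>\<^bsub>Gpi P\<^esub> \<in> carrier (Gpi P)"
      using Cons.prems Qset_carrier[OF assms(1), of Y] foldr_closed[OF assms(1), of gs] by auto
    ultimately show ?case using Cons by (simp add: m_assoc)
  qed
  then show ?thesis unfolding Mset_def using g h
    by (intro CollectI exI[of _ "gs @ hs"]) auto
qed

lemma Qset_X: "P \<subseteq> X \<Longrightarrow> Qset X P = {\<one>\<^bsub>Gpi P\<^esub>}"
  unfolding Qset_def by auto

lemma Mset_X: "bp \<notin> P \<Longrightarrow> P \<subseteq> X \<Longrightarrow> Mset X P = {\<one>\<^bsub>Gpi P\<^esub>}"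
proof -
  assume a: "bp \<notin> P" "P \<subseteq> X"
  interpret group "Gpi P" using group_Gpi a(1) .
  have "foldr (\<lambda>a b. a \<otimes>\<^bsub>Gpi P\<^esub> b) gs \<one>\<^bsub>Gpi P\<^esub> = \<one>\<^bsub>Gpi P\<^esub>" if "set gs \<subseteq> {\<one>\<^bsub>Gpi P\<^esub>}" for gs
    using that by (induction gs) auto
  then show ?thesis using Mset_one[of P X] unfolding Mset_def Qset_X[OF a(2)] by auto
qed

definition Fm :: "complex set \<Rightarrow> 'g config \<Rightarrow> 'g config" where
  "Fm X = (\<lambda>(P, \<psi>, \<phi>). (P, restrict \<psi> (Qset X P), \<phi>))"

definition Gm :: "complex set \<Rightarrow> 'g config \<Rightarrow> 'g config" where
  "Gm Y = (\<lambda>(P, \<psi>, \<phi>). (P, restrict \<phi> (Qset Y P), \<phi>))"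

lemma bp_notin_sub: "X \<subseteq> upper_half \<Longrightarrow> P \<subseteq> X \<Longrightarrow> bp \<notin> P"
  using bp_notin_upper by blast

lemma Hur_memD:
  assumes "(P, \<psi>, \<phi>) \<in> Hur X Y G"
  shows "finite P" "P \<subseteq> X" "\<phi> \<in> hom (Gpi P) G" "\<phi> \<in> extensional (carrier (Gpi P))"
      "\<psi> \<in> Qset Y P \<rightarrow> carrier G" "\<psi> \<in> extensional (Qset Y P)" "\<psi> \<one>\<^bsub>Gpi P\<^esub> = \<one>\<^bsub>G\<^esub>"
      "\<forall>x \<in> Qset Y P. \<psi> x = \<phi> x"
      "\<forall>x \<in> Qset Y P. \<forall>h \<in> carrier (Gpi P).
          \<psi> (inv\<^bsub>Gpi P\<^esub> h \<otimes>\<^bsub>Gpi P\<^esub> x \<otimes>\<^bsub>Gpi P\<^esub> h) = inv\<^bsub>G\<^esub> (\<phi> h) \<otimes>\<^bsub>G\<^esub> \<psi> x \<otimes>\<^bsub>G\<^esub> \<phi> h"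
  using assms by (auto simp: Hur_def)

lemma psi_restrict:
  assumes "(P, \<psi>, \<phi>) \<in> Hur X Y G"
  shows "\<psi> = restrict \<phi> (Qset Y P)"
  using Hur_memD[OF assms] by (auto simp: fun_eq_iff extensional_def restrict_def)

lemma Fm_in:
  assumes "X \<subseteq> upper_half" "group G" "c \<in> Hur X Y G"
  shows "Fm X c \<in> Hur X X G"
proof -
  obtain P \<psi> \<phi> where c: "c = (P, \<psi>, \<phi>)" by (cases c) auto
  note h = Hur_memD[OF assms(3)[unfolded c]]
  have bp: "bp \<notin> P" using bp_notin_sub[OF assms(1) h(2)] .
  interpret G: group G by fact
  interpret GP: group "Gpi P" using group_Gpi bp .
  have one: "\<one>\<^bsub>Gpi P\<^esub> \<in> Qset Y P" by (simp add: Qset_def)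
  have phc: "\<phi> h \<in> carrier G" if "h \<in> carrier (Gpi P)" for h
    using h(3) that by (auto simp: hom_def)
  show ?thesis
    unfolding c Fm_def using h one phc
    by (auto simp: Hur_def Qset_X)
qed

lemma Gm_in:
  assumes "X \<subseteq> upper_half" "group G" "c \<in> Hur X X G"
  shows "Gm Y c \<in> Hur X Y G"
proof -
  obtain P \<psi> \<phi> where c: "c = (P, \<psi>, \<phi>)" by (cases c) auto
  note h = Hur_memD[OF assms(3)[unfolded c]]
  have bp: "bp \<notin> P" using bp_notin_sub[OF assms(1) h(2)] .
  interpret G: group G by fact
  interpret GP: group "Gpi P" using group_Gpi bp .
  have gh: "group_hom (Gpi P) G \<phi>" using h(3) by (simp add: group_hom_def group_hom_axioms_def GP.is_group G.is_group)
  have Qc: "Qset Y P \<subseteq> carrier (Gpi P)" using Qset_carrier[OF bp] .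
  have phc: "\<phi> h \<in> carrier G" if "h \<in> carrier (Gpi P)" for h
    using h(3) that by (auto simp: hom_def)
  have conj: "restrict \<phi> (Qset Y P) (inv\<^bsub>Gpi P\<^esub> k \<otimes>\<^bsub>Gpi P\<^esub> x \<otimes>\<^bsub>Gpi P\<^esub> k)
      = inv\<^bsub>G\<^esub> \<phi> k \<otimes>\<^bsub>G\<^esub> restrict \<phi> (Qset Y P) x \<otimes>\<^bsub>G\<^esub> \<phi> k"
    if "x \<in> Qset Y P" "k \<in> carrier (Gpi P)" for x k
  proof -
    have xc: "x \<in> carrier (Gpi P)" using that Qc by blast
    have "inv\<^bsub>Gpi P\<^esub> k \<otimes>\<^bsub>Gpi P\<^esub> x \<otimes>\<^bsub>Gpi P\<^esub> k \<in> Qset Y P"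
      using Qset_conj[OF bp that(1,2)] .
    then show ?thesis using that xc
      by (simp add: group_hom.hom_mult[OF gh] group_hom.hom_inv[OF gh])
  qed
  have one: "\<one>\<^bsub>Gpi P\<^esub> \<in> Qset Y P" by (simp add: Qset_def)
  have "(P, restrict \<phi> (Qset Y P), \<phi>) \<in> Hur X Y G"
    unfolding Hur_def
  proof (intro CollectI case_prodI conjI)
    show "restrict \<phi> (Qset Y P) \<in> Qset Y P \<rightarrow> carrier G" using Qc phc by auto
    show "restrict \<phi> (Qset Y P) \<one>\<^bsub>Gpi P\<^esub> = \<one>\<^bsub>G\<^esub>"
      using one group_hom.hom_one[OF gh] by simp
  qed (use h conj in auto)
  then show ?thesis by (simp add: c Gm_def)
qed

lemma Gm_Fm:
  assumes "X \<subseteq> upper_half" "c \<in> Hur X Y G"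
  shows "Gm Y (Fm X c) = c"
proof -
  obtain P \<psi> \<phi> where c: "c = (P, \<psi>, \<phi>)" by (cases c) auto
  show ?thesis using psi_restrict[OF assms(2)[unfolded c]] by (simp add: c Fm_def Gm_def)
qed

lemma Fm_Gm:
  assumes "X \<subseteq> upper_half" "c \<in> Hur X X G"
  shows "Fm X (Gm Y c) = c"
proof -
  obtain P \<psi> \<phi> where c: "c = (P, \<psi>, \<phi>)" by (cases c) auto
  note h = Hur_memD[OF assms(2)[unfolded c]]
  have "restrict (restrict \<phi> (Qset Y P)) (Qset X P) = \<psi>"
    using psi_restrict[OF assms(2)[unfolded c]] h(2)
    by (auto simp: fun_eq_iff restrict_def Qset_X Qset_def)
  then show ?thesis by (simp add: c Fm_def Gm_def)
qed

lemma OPL: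
  assumes K: "convex K" "compact K" "w \<in> interior K"
    and p: "path p" "path_image p \<subseteq> K - {w}" and q: "path q" "path_image q \<subseteq> K - {w}"
    and e: "pathstart p = pathstart q" "pathfinish p = pathfinish q"
    and wn: "winding_number p w = winding_number q w"
  shows "homotopic_paths (K - {w}) p q"
proof -
  have h: "homotopic_paths (- {w}) p q"
    using winding_number_homotopic_paths_eq[of p w q] p q e wn by auto
  define cp where "cp = closest_point K"
  have Kne: "K \<noteq> {}" using K(3) interior_subset by blast
  have clK: "closed K" using K(2) compact_imp_closed by blast
  have cont: "continuous_on (- {w}) cp"
    unfolding cp_def by (rule continuous_on_subset[OF continuous_on_closest_point[OF K(1) clK Kne]]) auto
  have intne: "interior K \<noteq> {}" using K(3) by blast
  have into: "cp \<in> - {w} \<rightarrow> K - {w}"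
  proof
    fix y assume y: "y \<in> - {w}"
    show "cp y \<in> K - {w}"
    proof (cases "y \<in> K")
      case True then show ?thesis using y by (simp add: cp_def closest_point_self)
    next
      case False
      have "y \<in> affine hull K - rel_interior K"
        using False affine_hull_nonempty_interior[OF intne] rel_interior_subset by blast
      then have "cp y \<in> rel_frontier K" unfolding cp_def
        by (rule closest_point_in_rel_frontier[OF clK Kne])
      then have "cp y \<notin> interior K" "cp y \<in> K"
        using rel_interior_nonempty_interior[OF intne] clK
        by (auto simp: rel_frontier_def closure_closed)
      then show ?thesis using K(3) by auto
    qed
  qed
  have h2: "homotopic_paths (K - {w}) (cp \<circ> p) (cp \<circ> q)"
    by (rule homotopic_paths_continuous_image[OF h cont into])
  have "homotopic_paths (K - {w}) p (cp \<circ> p)"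
  proof (rule homotopic_paths_eq[OF p(1) p(2)])
    fix t :: real assume "t \<in> {0..1}"
    then have "p t \<in> K" using p(2) unfolding path_image_def by blast
    then show "p t = (cp \<circ> p) t" by (simp add: cp_def closest_point_self)
  qed
  moreover have "homotopic_paths (K - {w}) q (cp \<circ> q)"
  proof (rule homotopic_paths_eq[OF q(1) q(2)])
    fix t :: real assume "t \<in> {0..1}"
    then have "q t \<in> K" using q(2) unfolding path_image_def by blast
    then show "q t = (cp \<circ> q) t" by (simp add: cp_def closest_point_self)
  qed
  ultimately show ?thesis using h2
    by (meson homotopic_paths_sym homotopic_paths_trans)
qed

definition kap :: "complex set \<Rightarrow> complex \<Rightarrow> (real \<Rightarrow> complex)" where
  "kap T x = (if x = bp then linepath bp bp
      else (SOME k. path k \<and> path_image k \<subseteq> - T \<and> pathstart k = bp \<and> pathfinish k = x))"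

lemma kap:
  assumes "finite T" "bp \<notin> T" "x \<notin> T"
  shows "path (kap T x)" "path_image (kap T x) \<subseteq> - T" "pathstart (kap T x) = bp" "pathfinish (kap T x) = x"
proof -
  have pc: "path_connected (- T)"
    by (rule path_connected_complement_countable) (auto simp: assms(1) countable_finite)
  then have ex: "\<exists>k. path k \<and> path_image k \<subseteq> - T \<and> pathstart k = bp \<and> pathfinish k = x"
    using assms unfolding path_connected_def by blast
  have "path (kap T x) \<and> path_image (kap T x) \<subseteq> - T \<and> pathstart (kap T x) = bp \<and> pathfinish (kap T x) = x"
  proof (cases "x = bp")
    case True then show ?thesis using assms by (simp add: kap_def)
  next
    case False then show ?thesis using someI_ex[OF ex] by (simp add: kap_def)
  qed
  then show "path (kap T x)" "path_image (kap T x) \<subseteq> - T" "pathstart (kap T x) = bp" "pathfinish (kap T x) = x"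
    by auto
qed

definition PC :: "complex set \<Rightarrow> (real \<Rightarrow> complex) \<Rightarrow> cls" where
  "PC T p = cls T (kap T (pathstart p) +++ p +++ reversepath (kap T (pathfinish p)))"

locale PCT =
  fixes T :: "complex set"
  assumes fin: "finite T" and bpT: "bp \<notin> T"
begin

abbreviation (input) S where "S \<equiv> - T"

lemma pin_kap: "x \<notin> T \<Longrightarrow> pin (- T) (kap T x)"
  using kap[OF fin bpT] by (simp add: pin_def)

lemma kap_s: "x \<notin> T \<Longrightarrow> pathstart (kap T x) = bp" "x \<notin> T \<Longrightarrow> pathfinish (kap T x) = x"
  using kap[OF fin bpT] by (auto simp: kap_def)

lemma pin_ends: "pin (- T) p \<Longrightarrow> pathstart p \<notin> T \<and> pathfinish p \<notin> T"
  using pathstart_in_path_image[of p] pathfinish_in_path_image[of p] by (auto simp: pin_def)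

lemma PC_loopat: "pin (- T) p \<Longrightarrow> loopat T (kap T (pathstart p) +++ p +++ reversepath (kap T (pathfinish p)))"
  using pin_ends[of p] kap[OF fin bpT, of "pathstart p"] kap[OF fin bpT, of "pathfinish p"]
  by (auto simp: loopat_def pin_def path_image_join)

lemma PC_carrier: "pin (- T) p \<Longrightarrow> PC T p \<in> carrier (Gpi T)"
  unfolding PC_def carrier_Gpi using PC_loopat by blast

lemma PC_cong: "homotopic_paths (- T) p q \<Longrightarrow> PC T p = PC T q"
proof -
  assume h: "homotopic_paths (- T) p q"
  then have pq: "pin (- T) p" "pin (- T) q" using hp_imp_pin by auto
  have e: "pathstart q = pathstart p" "pathfinish q = pathfinish p" using hp_ends[OF h] by auto
  show ?thesis unfolding PC_def e
    apply (rule cls_eqI)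
    apply (rule hp_joinr)
      apply (rule pin_kap) using pin_ends[OF pq(1)] apply simp
     apply (rule hp_joinl[OF h])
    using pin_ends[OF pq(1)] kap_s pin_kap by (auto intro!: pin_rev)
qed

lemma PC_loop_bp:
  assumes "loopat T p" shows "PC T p = cls T p"
proof -
  have pp: "pin (- T) p" using assms by (simp add: loopat_def pin_def)
  have s: "pathstart p = bp" "pathfinish p = bp" using assms by (auto simp: loopat_def)
  have l: "pin (- T) (linepath bp bp)" using bpT by (simp add: pin_def)
  have "homotopic_paths (- T) (linepath bp bp +++ p +++ linepath bp bp) p"
  proof -
    have "homotopic_paths (- T) (p +++ linepath bp bp) p"
      using pp s by (intro homotopic_paths_rid') (auto simp: pin_def)
    then have "homotopic_paths (- T) (linepath bp bp +++ (p +++ linepath bp bp)) (linepath bp bp +++ p)"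
      using l s by (intro hp_joinr) auto
    moreover have "homotopic_paths (- T) (linepath bp bp +++ p) p"
      using pp s by (intro homotopic_paths_lid') (auto simp: pin_def)
    ultimately show ?thesis by (rule hp_trans)
  qed
  then show ?thesis unfolding PC_def s by (simp add: kap_def cls_eqI[symmetric])
qed

lemma PC_join:
  assumes p: "pin (- T) p" and q: "pin (- T) q" and m: "pathfinish p = pathstart q"
  shows "PC T (p +++ q) = PC T p \<otimes>\<^bsub>Gpi T\<^esub> PC T q"
proof -
  define ka kb kc where "ka = kap T (pathstart p)" and "kb = kap T (pathfinish p)" and "kc = kap T (pathfinish q)"
  have pk: "pin (- T) ka" "pin (- T) kb" "pin (- T) kc"
    using pin_ends[OF p] pin_ends[OF q] pin_kap unfolding ka_def kb_def kc_def by auto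
  have ks: "pathstart ka = bp" "pathstart kb = bp" "pathstart kc = bp"
     "pathfinish ka = pathstart p" "pathfinish kb = pathfinish p" "pathfinish kc = pathfinish q"
    using kap_s pin_ends[OF p] pin_ends[OF q] unfolding ka_def kb_def kc_def by auto
  have kb2: "kap T (pathstart q) = kb" using m kb_def by simp
  have "PC T p \<otimes>\<^bsub>Gpi T\<^esub> PC T q = cls T ((ka +++ p +++ reversepath kb) +++ (kb +++ q +++ reversepath kc))"
    unfolding PC_def ka_def[symmetric] kb_def[symmetric] kc_def[symmetric] kb2
    apply (rule mult_Gpi)
    using pk p q ks m by (auto simp: pin_def path_image_join intro!: pin_join pin_rev)
  also have "\<dots> = cls T (ka +++ (p +++ q) +++ reversepath kc)"
  proof (rule cls_eqI)
    let ?A = "ka +++ p"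
    have pA: "pin (- T) ?A" using pk p ks by auto
    have 1: "homotopic_paths (- T) ((ka +++ p +++ reversepath kb) +++ (kb +++ q +++ reversepath kc))
        ((?A +++ reversepath kb) +++ (kb +++ (q +++ reversepath kc)))"
      apply (rule hp_joinl)
        apply (rule hp_assoc_l) using pk p q ks m by (auto intro!: pin_join pin_rev)
    have 2: "homotopic_paths (- T) ((?A +++ reversepath kb) +++ (kb +++ (q +++ reversepath kc)))
        (?A +++ (reversepath kb +++ (kb +++ (q +++ reversepath kc))))"
      apply (rule hp_assoc_r) using pk p q ks m pA by (auto intro!: pin_join pin_rev)
    have 3: "homotopic_paths (- T) (reversepath kb +++ (kb +++ (q +++ reversepath kc)))
        ((reversepath kb +++ kb) +++ (q +++ reversepath kc))"
      apply (rule hp_assoc_l) using pk p q ks m by auto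
    have 4: "homotopic_paths (- T) ((reversepath kb +++ kb) +++ (q +++ reversepath kc))
        (linepath (pathfinish p) (pathfinish p) +++ (q +++ reversepath kc))"
      apply (rule hp_joinl)
      using homotopic_paths_linv[of kb "- T"] pk ks q m apply (simp add: pin_def)
      using pk ks q m by (auto intro!: pin_join pin_rev)
    have 5: "homotopic_paths (- T) (linepath (pathfinish p) (pathfinish p) +++ (q +++ reversepath kc))
        (q +++ reversepath kc)"
      apply (rule homotopic_paths_lid') using pk ks q m by (auto simp: pin_def path_image_join)
    have 6: "homotopic_paths (- T) (?A +++ (reversepath kb +++ (kb +++ (q +++ reversepath kc))))
        (?A +++ (q +++ reversepath kc))"
      apply (rule hp_joinr[OF pA])
      using hp_trans[OF 3 hp_trans[OF 4 5]] apply simp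
      using ks by simp
    have 7: "homotopic_paths (- T) (?A +++ (q +++ reversepath kc)) (ka +++ (p +++ (q +++ reversepath kc)))"
      apply (rule hp_assoc_r) using pk p q ks m by auto
    have 8: "homotopic_paths (- T) (ka +++ (p +++ (q +++ reversepath kc))) (ka +++ ((p +++ q) +++ reversepath kc))"
      apply (rule hp_joinr) apply (rule pk)
       apply (rule hp_assoc_l) using pk p q ks m by auto
    show "homotopic_paths (- T) ((ka +++ p +++ reversepath kb) +++ (kb +++ q +++ reversepath kc))
        (ka +++ (p +++ q) +++ reversepath kc)"
      using hp_trans[OF 1 hp_trans[OF 2 hp_trans[OF 6 hp_trans[OF 7 8]]]] by simp
  qed
  also have "\<dots> = PC T (p +++ q)"
    unfolding PC_def ka_def kc_def using m by simp
  finally show ?thesis by simp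
qed

lemma PC_const: "a \<notin> T \<Longrightarrow> PC T (linepath a a) = \<one>\<^bsub>Gpi T\<^esub>"
proof -
  assume a: "a \<notin> T"
  interpret group "Gpi T" using group_Gpi bpT .
  have l: "pin (- T) (linepath a a)" using a by (simp add: pin_def)
  have "PC T (linepath a a +++ linepath a a) = PC T (linepath a a)"
    apply (rule PC_cong) using homotopic_paths_rid'[of "linepath a a" "- T" a] a by simp
  then have "PC T (linepath a a) \<otimes>\<^bsub>Gpi T\<^esub> PC T (linepath a a) = PC T (linepath a a)"
    using PC_join[OF l l] by simp
  then have "PC T (linepath a a) \<otimes>\<^bsub>Gpi T\<^esub> PC T (linepath a a) = PC T (linepath a a) \<otimes>\<^bsub>Gpi T\<^esub> \<one>\<^bsub>Gpi T\<^esub>"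
    using PC_carrier[OF l] by simp
  then show ?thesis using PC_carrier[OF l] by simp
qed

lemma PC_rev:
  assumes p: "pin (- T) p" shows "PC T (reversepath p) = inv\<^bsub>Gpi T\<^esub> PC T p"
proof -
  interpret group "Gpi T" using group_Gpi bpT .
  have "PC T (p +++ reversepath p) = PC T (linepath (pathstart p) (pathstart p))"
    apply (rule PC_cong) using homotopic_paths_rinv[of p "- T"] p by (simp add: pin_def)
  also have "\<dots> = \<one>\<^bsub>Gpi T\<^esub>" using pin_ends[OF p] PC_const by simp
  finally have "PC T p \<otimes>\<^bsub>Gpi T\<^esub> PC T (reversepath p) = \<one>\<^bsub>Gpi T\<^esub>"
    using PC_join[OF p pin_rev[OF p]] by simp
 then have "PC T (reversepath p) \<otimes>\<^bsub>Gpi T\<^esub> PC T p = \<one>\<^bsub>Gpi T\<^esub>"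
    using PC_carrier[OF p] PC_carrier[OF pin_rev[OF p]] inv_comm by blast
  then show ?thesis using PC_carrier[OF p] PC_carrier[OF pin_rev[OF p]]
    by (simp add: inv_equality)
qed

lemma cls_conj:
  assumes b: "pin (- T) \<beta>" "pathstart \<beta> = bp" and l: "pin (- T) lp" "pathstart lp = pathfinish \<beta>" "pathfinish lp = pathfinish \<beta>"
  shows "cls T (\<beta> +++ lp +++ reversepath \<beta>) = PC T \<beta> \<otimes>\<^bsub>Gpi T\<^esub> PC T lp \<otimes>\<^bsub>Gpi T\<^esub> inv\<^bsub>Gpi T\<^esub> PC T \<beta>"
proof -
  interpret group "Gpi T" using group_Gpi bpT .
  have lpp: "loopat T (\<beta> +++ lp +++ reversepath \<beta>)"
    using b l by (auto simp: loopat_def pin_def path_image_join)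
  have "cls T (\<beta> +++ lp +++ reversepath \<beta>) = PC T (\<beta> +++ lp +++ reversepath \<beta>)"
    using PC_loop_bp[OF lpp] by simp
  also have "\<dots> = PC T \<beta> \<otimes>\<^bsub>Gpi T\<^esub> (PC T lp \<otimes>\<^bsub>Gpi T\<^esub> PC T (reversepath \<beta>))"
  proof -
    have r: "pin (- T) (reversepath \<beta>)" using b by auto
    have j: "pin (- T) (lp +++ reversepath \<beta>)" using b l by (intro pin_join) auto
    show ?thesis using PC_join[OF b(1) j] PC_join[OF l(1) r] b l by simp
  qed
  also have "\<dots> = PC T \<beta> \<otimes>\<^bsub>Gpi T\<^esub> PC T lp \<otimes>\<^bsub>Gpi T\<^esub> inv\<^bsub>Gpi T\<^esub> PC T \<beta>"
    using b l by (simp add: PC_rev PC_carrier m_assoc)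
  finally show ?thesis .
qed

end

lemma (in group) cancel_lr: "x \<in> carrier G \<Longrightarrow> y \<in> carrier G \<Longrightarrow> x \<otimes> (inv x \<otimes> y) = y"
  by (simp flip: m_assoc)
lemma (in group) cancel_rl: "x \<in> carrier G \<Longrightarrow> y \<in> carrier G \<Longrightarrow> inv x \<otimes> (x \<otimes> y) = y"
  by (simp flip: m_assoc)

context PCT
begin

abbreviation E where "E a b \<equiv> PC T (linepath a b)"

lemma seg_pin: "closed_segment a b \<subseteq> - T \<Longrightarrow> pin (- T) (linepath a b)"
  by (simp add: pin_def)

lemma E_carrier: "closed_segment a b \<subseteq> - T \<Longrightarrow> E a b \<in> carrier (Gpi T)"
  using PC_carrier seg_pin by blast

lemma E_rev: "closed_segment a b \<subseteq> - T \<Longrightarrow> E b a = inv\<^bsub>Gpi T\<^esub> E a b"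
  using PC_rev[OF seg_pin, of a b] by (simp add: reversepath_linepath)

lemma PC_seg_split:
  assumes ac: "closed_segment a c \<subseteq> - T" and b: "b \<in> closed_segment a c"
  shows "E a c = E a b \<otimes>\<^bsub>Gpi T\<^esub> E b c"
proof -
  have sab: "closed_segment a b \<subseteq> closed_segment a c" "closed_segment b c \<subseteq> closed_segment a c"
    using b by (auto simp: subset_closed_segment)
  have h: "homotopic_paths (- T) (linepath a c) (linepath a b +++ linepath b c)"
  proof (rule homotopic_paths_linear)
    fix t :: real assume t: "t \<in> {0..1}"
    have "linepath a c t \<in> closed_segment a c"
      using t by (metis linepath_image_01 imageI)
    moreover have "(linepath a b +++ linepath b c) t \<in> closed_segment a c"
    proof -
      have "(linepath a b +++ linepath b c) t \<in> path_image (linepath a b +++ linepath b c)"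
        using t by (simp add: path_image_def)
      then show ?thesis using sab by (auto simp: path_image_join)
    qed
    ultimately have "closed_segment (linepath a c t) ((linepath a b +++ linepath b c) t) \<subseteq> closed_segment a c"
      by (simp add: subset_closed_segment)
    then show "closed_segment (linepath a c t) ((linepath a b +++ linepath b c) t) \<subseteq> - T"
      using ac by blast
  qed auto
  have "E a c = PC T (linepath a b +++ linepath b c)"
    by (rule PC_cong[OF h])
  also have "\<dots> = E a b \<otimes>\<^bsub>Gpi T\<^esub> E b c"
    by (rule PC_join) (use sab ac in \<open>auto intro: seg_pin\<close>)
  finally show ?thesis .
qed

lemma PC_rect:
  assumes "path_image (rectpath a1 a3) \<subseteq> - T"
  defines "a2 \<equiv> Complex (Re a3) (Im a1)" and "a4 \<equiv> Complex (Re a1) (Im a3)"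
  shows "PC T (rectpath a1 a3) = E a1 a2 \<otimes>\<^bsub>Gpi T\<^esub> (E a2 a3 \<otimes>\<^bsub>Gpi T\<^esub> (E a3 a4 \<otimes>\<^bsub>Gpi T\<^esub> E a4 a1))"
    "closed_segment a1 a2 \<subseteq> - T" "closed_segment a2 a3 \<subseteq> - T" "closed_segment a3 a4 \<subseteq> - T"
    "closed_segment a4 a1 \<subseteq> - T"
proof -
  have r: "rectpath a1 a3 = linepath a1 a2 +++ linepath a2 a3 +++ linepath a3 a4 +++ linepath a4 a1"
    by (simp add: rectpath_def a2_def a4_def Let_def)
  show s: "closed_segment a1 a2 \<subseteq> - T" "closed_segment a2 a3 \<subseteq> - T" "closed_segment a3 a4 \<subseteq> - T"
    "closed_segment a4 a1 \<subseteq> - T"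
    using assms(1) unfolding r by (auto simp: path_image_join)
  show "PC T (rectpath a1 a3) = E a1 a2 \<otimes>\<^bsub>Gpi T\<^esub> (E a2 a3 \<otimes>\<^bsub>Gpi T\<^esub> (E a3 a4 \<otimes>\<^bsub>Gpi T\<^esub> E a4 a1))"
    unfolding r using s
    by (simp add: PC_join seg_pin pin_join)
qed

lemma rect_image_sub:
  assumes "Re a1 \<le> Re a3" "Im a1 \<le> Im a3" "Re b1 \<le> Re b3" "Im b1 \<le> Im b3"
    and "\<And>z. z \<in> path_image (rectpath b1 b3) \<Longrightarrow> z \<notin> path_image (rectpath a1 a3) \<Longrightarrow> z \<notin> T"
    and "path_image (rectpath a1 a3) \<subseteq> - T"
  shows "path_image (rectpath b1 b3) \<subseteq> - T"
  using assms by blast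

lemma RECT_v:
  assumes t: "Re a1 < t" "t < Re a3" and im: "Im a1 < Im a3"
    and R: "path_image (rectpath a1 a3) \<subseteq> - T" and tT: "\<forall>z\<in>T. Re z \<noteq> t"
  defines "m0 \<equiv> Complex t (Im a1)" and "m1 \<equiv> Complex t (Im a3)"
  shows "path_image (rectpath a1 m1) \<subseteq> - T" "path_image (rectpath m0 a3) \<subseteq> - T"
    "closed_segment a1 m0 \<subseteq> - T"
    "PC T (rectpath a1 a3) = E a1 m0 \<otimes>\<^bsub>Gpi T\<^esub> PC T (rectpath m0 a3) \<otimes>\<^bsub>Gpi T\<^esub> inv\<^bsub>Gpi T\<^esub> (E a1 m0)
        \<otimes>\<^bsub>Gpi T\<^esub> PC T (rectpath a1 m1)"
proof -
  interpret group "Gpi T" using group_Gpi bpT .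
  define a2 a4 where "a2 = Complex (Re a3) (Im a1)" and "a4 = Complex (Re a1) (Im a3)"
  have RR: "path_image (rectpath a1 a3) =
           {z. Re z \<in> {Re a1, Re a3} \<and> Im z \<in> {Im a1..Im a3}} \<union>
           {z. Im z \<in> {Im a1, Im a3} \<and> Re z \<in> {Re a1..Re a3}}"
    using t im by (intro path_image_rectpath) auto
  show R1: "path_image (rectpath a1 m1) \<subseteq> - T"
  proof -
    have "path_image (rectpath a1 m1) =
           {z. Re z \<in> {Re a1, Re m1} \<and> Im z \<in> {Im a1..Im m1}} \<union>
           {z. Im z \<in> {Im a1, Im m1} \<and> Re z \<in> {Re a1..Re m1}}"
      using t im by (intro path_image_rectpath) (auto simp: m1_def)
    then show ?thesis using R RR tT t unfolding m1_def by auto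
  qed
  show R2: "path_image (rectpath m0 a3) \<subseteq> - T"
  proof -
    have "path_image (rectpath m0 a3) =
           {z. Re z \<in> {Re m0, Re a3} \<and> Im z \<in> {Im m0..Im a3}} \<union>
           {z. Im z \<in> {Im m0, Im a3} \<and> Re z \<in> {Re m0..Re a3}}"
      using t im by (intro path_image_rectpath) (auto simp: m0_def)
    then show ?thesis using R RR tT t unfolding m0_def by auto
  qed
  note A = PC_rect[OF R]
  note B = PC_rect[OF R1]
  note C = PC_rect[OF R2]
  have e1: "Complex (Re m1) (Im a1) = m0" "Complex (Re a1) (Im m1) = a4"
    "Complex (Re a3) (Im m0) = a2" "Complex (Re m0) (Im a3) = m1"
    by (simp_all add: m0_def m1_def a2_def a4_def)
  note A = A[folded a2_def a4_def] and B = B[unfolded e1] and C = C[unfolded e1]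
  have m0s: "m0 \<in> closed_segment a1 a2"
    using t by (auto simp: closed_segment_same_Im m0_def a2_def closed_segment_eq_real_ivl)
  have m1s: "m1 \<in> closed_segment a3 a4"
    using t by (auto simp: closed_segment_same_Im m1_def a4_def closed_segment_eq_real_ivl)
  show s1: "closed_segment a1 m0 \<subseteq> - T" using B(2) .
  have sp1: "E a1 a2 = E a1 m0 \<otimes>\<^bsub>Gpi T\<^esub> E m0 a2" by (rule PC_seg_split[OF A(2) m0s])
  have sp2: "E a3 a4 = E a3 m1 \<otimes>\<^bsub>Gpi T\<^esub> E m1 a4" by (rule PC_seg_split[OF A(4) m1s])
  have rv: "E m1 m0 = inv\<^bsub>Gpi T\<^esub> E m0 m1" by (rule E_rev[OF B(3)])
  have c: "E a1 m0 \<in> carrier (Gpi T)" "E m0 a2 \<in> carrier (Gpi T)" "E a2 a3 \<in> carrier (Gpi T)"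
     "E a3 m1 \<in> carrier (Gpi T)" "E m1 a4 \<in> carrier (Gpi T)" "E a4 a1 \<in> carrier (Gpi T)"
     "E m0 m1 \<in> carrier (Gpi T)"
    using A B C by (auto intro: E_carrier)
  show "PC T (rectpath a1 a3) = E a1 m0 \<otimes>\<^bsub>Gpi T\<^esub> PC T (rectpath m0 a3) \<otimes>\<^bsub>Gpi T\<^esub> inv\<^bsub>Gpi T\<^esub> (E a1 m0)
        \<otimes>\<^bsub>Gpi T\<^esub> PC T (rectpath a1 m1)"
    unfolding A(1) B(1) C(1) sp1 sp2 rv using c
    by (simp add: m_assoc cancel_lr cancel_rl)
qed

lemma RECT_h:
  assumes t: "Im a1 < t" "t < Im a3" and re: "Re a1 < Re a3"
    and R: "path_image (rectpath a1 a3) \<subseteq> - T" and tT: "\<forall>z\<in>T. Im z \<noteq> t"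
  defines "n0 \<equiv> Complex (Re a1) t" and "n1 \<equiv> Complex (Re a3) t"
  shows "path_image (rectpath a1 n1) \<subseteq> - T" "path_image (rectpath n0 a3) \<subseteq> - T"
    "closed_segment a1 n0 \<subseteq> - T"
    "PC T (rectpath a1 a3) = PC T (rectpath a1 n1) \<otimes>\<^bsub>Gpi T\<^esub> E a1 n0 \<otimes>\<^bsub>Gpi T\<^esub> PC T (rectpath n0 a3)
        \<otimes>\<^bsub>Gpi T\<^esub> inv\<^bsub>Gpi T\<^esub> (E a1 n0)"
proof -
  interpret group "Gpi T" using group_Gpi bpT .
  define a2 a4 where "a2 = Complex (Re a3) (Im a1)" and "a4 = Complex (Re a1) (Im a3)"
  have RR: "path_image (rectpath a1 a3) =
           {z. Re z \<in> {Re a1, Re a3} \<and> Im z \<in> {Im a1..Im a3}} \<union>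
           {z. Im z \<in> {Im a1, Im a3} \<and> Re z \<in> {Re a1..Re a3}}"
    using t re by (intro path_image_rectpath) auto
  show R1: "path_image (rectpath a1 n1) \<subseteq> - T"
  proof -
    have "path_image (rectpath a1 n1) =
           {z. Re z \<in> {Re a1, Re n1} \<and> Im z \<in> {Im a1..Im n1}} \<union>
           {z. Im z \<in> {Im a1, Im n1} \<and> Re z \<in> {Re a1..Re n1}}"
      using t re by (intro path_image_rectpath) (auto simp: n1_def)
    then show ?thesis using R RR tT t unfolding n1_def by auto
  qed
  show R2: "path_image (rectpath n0 a3) \<subseteq> - T"
  proof -
    have "path_image (rectpath n0 a3) =
           {z. Re z \<in> {Re n0, Re a3} \<and> Im z \<in> {Im n0..Im a3}} \<union>
           {z. Im z \<in> {Im n0, Im a3} \<and> Re z \<in> {Re n0..Re a3}}"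
      using t re by (intro path_image_rectpath) (auto simp: n0_def)
    then show ?thesis using R RR tT t unfolding n0_def by auto
  qed
  note A = PC_rect[OF R]
  note B = PC_rect[OF R1]
  note C = PC_rect[OF R2]
  have e1: "Complex (Re n1) (Im a1) = a2" "Complex (Re a1) (Im n1) = n0"
    "Complex (Re a3) (Im n0) = n1" "Complex (Re n0) (Im a3) = a4"
    by (simp_all add: n0_def n1_def a2_def a4_def)
  note A = A[folded a2_def a4_def] and B = B[unfolded e1] and C = C[unfolded e1]
  have n1s: "n1 \<in> closed_segment a2 a3"
    using t by (auto simp: closed_segment_same_Re n1_def a2_def closed_segment_eq_real_ivl)
  have n0s: "n0 \<in> closed_segment a4 a1"
    using t by (auto simp: closed_segment_same_Re n0_def a4_def closed_segment_eq_real_ivl)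
  have s0: "closed_segment n0 a1 \<subseteq> - T" using B(5) .
  then show s1: "closed_segment a1 n0 \<subseteq> - T" by (simp add: closed_segment_commute)
  have sp1: "E a2 a3 = E a2 n1 \<otimes>\<^bsub>Gpi T\<^esub> E n1 a3" by (rule PC_seg_split[OF A(3) n1s])
  have sp2: "E a4 a1 = E a4 n0 \<otimes>\<^bsub>Gpi T\<^esub> E n0 a1" by (rule PC_seg_split[OF A(5) n0s])
  have rv: "E n1 n0 = inv\<^bsub>Gpi T\<^esub> E n0 n1" by (rule E_rev[OF C(2)])
  have rv2: "E a1 n0 = inv\<^bsub>Gpi T\<^esub> E n0 a1" by (rule E_rev[OF s0])
  have c: "E a1 a2 \<in> carrier (Gpi T)" "E a2 n1 \<in> carrier (Gpi T)" "E n1 a3 \<in> carrier (Gpi T)"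
     "E a3 a4 \<in> carrier (Gpi T)" "E a4 n0 \<in> carrier (Gpi T)" "E n0 a1 \<in> carrier (Gpi T)"
     "E n0 n1 \<in> carrier (Gpi T)"
    using A B C by (auto intro: E_carrier)
  show "PC T (rectpath a1 a3) = PC T (rectpath a1 n1) \<otimes>\<^bsub>Gpi T\<^esub> E a1 n0 \<otimes>\<^bsub>Gpi T\<^esub> PC T (rectpath n0 a3)
        \<otimes>\<^bsub>Gpi T\<^esub> inv\<^bsub>Gpi T\<^esub> (E a1 n0)"
    unfolding A(1) B(1) C(1) sp1 sp2 rv rv2 using c
    by (simp add: m_assoc cancel_lr cancel_rl)
qed

lemma conj_one_Mset:
  assumes "pin (- T) \<beta>" "x = \<one>\<^bsub>Gpi T\<^esub>"
  shows "PC T \<beta> \<otimes>\<^bsub>Gpi T\<^esub> inv\<^bsub>Gpi T\<^esub> x \<otimes>\<^bsub>Gpi T\<^esub> inv\<^bsub>Gpi T\<^esub> (PC T \<beta>) \<in> Mset Y T"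
proof -
  interpret group "Gpi T" using group_Gpi bpT .
  show ?thesis using assms PC_carrier[OF assms(1)] Mset_one by simp
qed

lemma RECT0:
  assumes "Re a1 < Re a3" "Im a1 < Im a3" "cbox a1 a3 \<inter> T = {}"
  shows "PC T (rectpath a1 a3) = \<one>\<^bsub>Gpi T\<^esub>"
proof -
  have sub: "path_image (rectpath a1 a3) \<subseteq> cbox a1 a3"
    using assms by (intro path_image_rectpath_subset_cbox) auto
  have a1: "a1 \<in> cbox a1 a3" using assms by (auto simp: in_cbox_complex_iff)
  have "homotopic_paths (- T) (rectpath a1 a3) (linepath a1 a1)"
  proof (rule homotopic_paths_linear)
    fix t :: real assume "t \<in> {0..1}"
    then have "rectpath a1 a3 t \<in> cbox a1 a3" using sub by (auto simp: path_image_def)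
    then have "closed_segment (rectpath a1 a3 t) (linepath a1 a1 t) \<subseteq> cbox a1 a3"
      using a1 by (intro closed_segment_subset) (auto simp: convex_box)
    then show "closed_segment (rectpath a1 a3 t) (linepath a1 a1 t) \<subseteq> - T" using assms(3) by blast
  qed auto
  then have "PC T (rectpath a1 a3) = PC T (linepath a1 a1)" by (rule PC_cong)
  also have "\<dots> = \<one>\<^bsub>Gpi T\<^esub>" using a1 assms(3) by (intro PC_const) blast
  finally show ?thesis .
qed

lemma RECT1:
  assumes re: "Re a1 < Re a3" and im: "Im a1 < Im a3" and w: "cbox a1 a3 \<inter> T = {w}"
    and R: "path_image (rectpath a1 a3) \<subseteq> - T" and wY: "w \<notin> Y"
    and b: "pin (- T) \<beta>" "pathstart \<beta> = bp" "pathfinish \<beta> = a1"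
  shows "PC T \<beta> \<otimes>\<^bsub>Gpi T\<^esub> inv\<^bsub>Gpi T\<^esub> (PC T (rectpath a1 a3)) \<otimes>\<^bsub>Gpi T\<^esub> inv\<^bsub>Gpi T\<^esub> (PC T \<beta>)
      \<in> Mset Y T"
proof -
  interpret group "Gpi T" using group_Gpi bpT .
  have wT: "w \<in> T" "w \<in> cbox a1 a3" using w by auto
  have wbox: "w \<in> box a1 a3"
    using wT R path_image_rectpath_cbox_minus_box[of a1 a3] re im by auto
  obtain \<delta> where d: "\<delta> > 0" "cball w \<delta> \<subseteq> box a1 a3"
    using open_contains_cball[of "box a1 a3"] wbox by (auto simp: open_box)
  define w1 where "w1 = w + complex_of_real \<delta>"
  define \<sigma> where "\<sigma> = linepath a1 w1"
  define c where "c = reversepath (circlepath w \<delta>)"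
  have "w1 \<in> cball w \<delta>" using d unfolding w1_def by (simp add: dist_norm)
  then have w1b: "w1 \<in> cbox a1 a3" using d box_subset_cbox by blast
  have a1b: "a1 \<in> cbox a1 a3" using re im by (auto simp: in_cbox_complex_iff)
  have segb: "closed_segment a1 w1 \<subseteq> cbox a1 a3"
    using w1b a1b by (intro closed_segment_subset) (auto simp: convex_box)
  have wseg: "w \<notin> closed_segment a1 w1"
  proof
    assume "w \<in> closed_segment a1 w1"
    then obtain u where u: "0 \<le> u" "u \<le> 1" "w = (1 - u) *\<^sub>R a1 + u *\<^sub>R w1"
      by (auto simp: closed_segment_def)
    have "Im w = Im ((1 - u) *\<^sub>R a1 + u *\<^sub>R w1)" using arg_cong[OF u(3), of Im] .
    also have "\<dots> = (1 - u) * Im a1 + u * Im w" by (simp add: w1_def)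
    finally have "Im w = (1 - u) * Im a1 + u * Im w" .
    then have "(1 - u) * (Im w - Im a1) = 0" by (simp add: algebra_simps)
    moreover have "Im w > Im a1" using wbox by (auto simp: in_box_complex_iff)
    ultimately have "u = 1" by simp
    then have "w = w1" using u by simp
    then show False using d by (simp add: w1_def)
  qed
  have sph: "sphere w \<delta> \<subseteq> cbox a1 a3 - {w}"
  proof -
    have "sphere w \<delta> \<subseteq> cball w \<delta>" by auto
    then have "sphere w \<delta> \<subseteq> cbox a1 a3" using d(2) box_subset_cbox by blast
    moreover have "w \<notin> sphere w \<delta>" using d by simp
    ultimately show ?thesis by blast
  qed
  have K: "cbox a1 a3 - {w} \<subseteq> - T" using w by auto
  have pc: "path c" "path_image c = sphere w \<delta>" "pathstart c = w1" "pathfinish c = w1"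
    using d by (auto simp: c_def w1_def)
  have ps: "path \<sigma>" "path_image \<sigma> \<subseteq> cbox a1 a3 - {w}" "pathstart \<sigma> = a1" "pathfinish \<sigma> = w1"
    using segb wseg by (auto simp: \<sigma>_def)
  define l where "l = \<sigma> +++ c +++ reversepath \<sigma>"
  have pl: "path l" "path_image l \<subseteq> cbox a1 a3 - {w}" "pathstart l = a1" "pathfinish l = a1"
    using pc ps sph by (auto simp: l_def path_image_join)
  have sub: "path_image (rectpath a1 a3) \<subseteq> cbox a1 a3"
    using re im by (intro path_image_rectpath_subset_cbox) auto
  have pr: "path (reversepath (rectpath a1 a3))" "path_image (reversepath (rectpath a1 a3)) \<subseteq> cbox a1 a3 - {w}"
    using sub R wT by auto
  have wn1: "winding_number (reversepath (rectpath a1 a3)) w = -1"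
    using winding_number_reversepath[of "rectpath a1 a3" w] winding_number_rectpath[OF wbox] R wT by auto
  have wn2: "winding_number l w = -1"
  proof -
    have "w \<notin> path_image \<sigma>" "w \<notin> path_image c" using ps pc d by auto
    then have "winding_number l w = winding_number \<sigma> w + (winding_number c w + - winding_number \<sigma> w)"
      unfolding l_def using ps pc
      by (simp add: winding_number_join winding_number_reversepath path_image_join)
    moreover have "winding_number c w = -1"
      using winding_number_reversepath[of "circlepath w \<delta>" w] winding_number_circlepath_centre[OF d(1)] d
      by (simp add: c_def)
    ultimately show ?thesis by simp
  qed
  have h: "homotopic_paths (cbox a1 a3 - {w}) (reversepath (rectpath a1 a3)) l"
    by (rule OPL) (use pr pl wn1 wn2 wbox in \<open>auto simp: convex_box compact_cbox\<close>)
  have pinr: "pin (- T) (rectpath a1 a3)" using R by (simp add: pin_def)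
  have "inv\<^bsub>Gpi T\<^esub> (PC T (rectpath a1 a3)) = PC T l"
    using PC_rev[OF pinr] PC_cong[OF homotopic_paths_subset[OF h K]] by simp
  have pins: "pin (- T) \<sigma>" "pin (- T) c" using ps pc sph K by (auto simp: pin_def)
  have "PC T l = PC T \<sigma> \<otimes>\<^bsub>Gpi T\<^esub> PC T c \<otimes>\<^bsub>Gpi T\<^esub> inv\<^bsub>Gpi T\<^esub> (PC T \<sigma>)"
  proof -
    have "PC T l = PC T \<sigma> \<otimes>\<^bsub>Gpi T\<^esub> (PC T c \<otimes>\<^bsub>Gpi T\<^esub> PC T (reversepath \<sigma>))"
      unfolding l_def using pins ps pc by (simp add: PC_join pin_join pin_rev)
    then show ?thesis using pins PC_carrier by (simp add: PC_rev m_assoc)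
  qed
  define \<beta>' where "\<beta>' = \<beta> +++ \<sigma>"
  have pb': "pin (- T) \<beta>'" "pathstart \<beta>' = bp" "pathfinish \<beta>' = w1"
    using b pins ps by (auto simp: \<beta>'_def)
  have PCb': "PC T \<beta>' = PC T \<beta> \<otimes>\<^bsub>Gpi T\<^esub> PC T \<sigma>"
    unfolding \<beta>'_def using b pins ps by (simp add: PC_join)
  have "PC T \<beta> \<otimes>\<^bsub>Gpi T\<^esub> inv\<^bsub>Gpi T\<^esub> (PC T (rectpath a1 a3)) \<otimes>\<^bsub>Gpi T\<^esub> inv\<^bsub>Gpi T\<^esub> (PC T \<beta>)
      = PC T \<beta>' \<otimes>\<^bsub>Gpi T\<^esub> PC T c \<otimes>\<^bsub>Gpi T\<^esub> inv\<^bsub>Gpi T\<^esub> (PC T \<beta>')"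
    unfolding \<open>inv\<^bsub>Gpi T\<^esub> (PC T (rectpath a1 a3)) = PC T l\<close> \<open>PC T l = _\<close> PCb'
    using PC_carrier pins b by (simp add: m_assoc inv_mult_group)
  also have "\<dots> = cls T (\<beta>' +++ c +++ reversepath \<beta>')"
    using cls_conj[of \<beta>' c] pb' pins pc by simp
  also have "\<dots> \<in> small_loops T w"
  proof -
    have "cball w \<delta> \<subseteq> cbox a1 a3" using d(2) box_subset_cbox by blast
    then have "cball w \<delta> \<inter> T \<subseteq> {w}" using w by blast
    moreover have "w \<in> cball w \<delta> \<inter> T" using d wT by simp
    ultimately have "cball w \<delta> \<inter> T = {w}" by blast
    then show ?thesis unfolding small_loops_def cls_def[symmetric] c_def
      using d pb' pc unfolding pin_def c_def
      by (intro CollectI exI[of _ \<beta>'] exI[of _ \<delta>]) (auto simp: w1_def)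
  qed
  finally show ?thesis
    using Mset_single[OF bpT] wT wY unfolding Qset_def by blast
qed

lemma avoid_real:
  fixes A :: "real set"
  assumes "finite A" "a < b"
  obtains t where "a < t" "t < b" "t \<notin> A"
proof -
  have "infinite {a<..<b}" using assms(2) by simp
  then have "{a<..<b} - A \<noteq> {}" using assms(1) by (metis finite_subset Diff_eq_empty_iff)
  then obtain t where "t \<in> {a<..<b} - A" by blast
  then show ?thesis using that by auto
qed

lemma RECT:
  assumes "Re a1 < Re a3" "Im a1 < Im a3" "path_image (rectpath a1 a3) \<subseteq> - T"
    "cbox a1 a3 \<inter> T \<inter> Y = {}"
    "pin (- T) \<beta>" "pathstart \<beta> = bp" "pathfinish \<beta> = a1"
  shows "PC T \<beta> \<otimes>\<^bsub>Gpi T\<^esub> inv\<^bsub>Gpi T\<^esub> (PC T (rectpath a1 a3)) \<otimes>\<^bsub>Gpi T\<^esub> inv\<^bsub>Gpi T\<^esub> (PC T \<beta>)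
      \<in> Mset Y T"
proof -
  interpret group "Gpi T" using group_Gpi bpT .
  have "\<And>a1 a3 \<beta>. card (cbox a1 a3 \<inter> T) = n \<Longrightarrow> Re a1 < Re a3 \<Longrightarrow> Im a1 < Im a3 \<Longrightarrow>
      path_image (rectpath a1 a3) \<subseteq> - T \<Longrightarrow> cbox a1 a3 \<inter> T \<inter> Y = {} \<Longrightarrow>
      pin (- T) \<beta> \<Longrightarrow> pathstart \<beta> = bp \<Longrightarrow> pathfinish \<beta> = a1 \<Longrightarrow>
      PC T \<beta> \<otimes>\<^bsub>Gpi T\<^esub> inv\<^bsub>Gpi T\<^esub> (PC T (rectpath a1 a3)) \<otimes>\<^bsub>Gpi T\<^esub> inv\<^bsub>Gpi T\<^esub> (PC T \<beta>)
      \<in> Mset Y T" for n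
  proof (induction n rule: less_induct)
    case (less n a1 a3 \<beta>)
    have fin2: "finite (cbox a1 a3 \<inter> T)" using fin by simp
    have pinr: "pin (- T) (rectpath a1 a3)" using less.prems by (simp add: pin_def)
    have cb: "PC T \<beta> \<in> carrier (Gpi T)" "PC T (rectpath a1 a3) \<in> carrier (Gpi T)"
      using PC_carrier less.prems pinr by auto
    consider "n = 0" | "n = 1" | "n \<ge> 2" by linarith
    then show ?case
    proof cases
      case 1
      then have "cbox a1 a3 \<inter> T = {}" using less.prems(1) fin2 by simp
      then have "PC T (rectpath a1 a3) = \<one>\<^bsub>Gpi T\<^esub>" using RECT0 less.prems by blast
      then show ?thesis using conj_one_Mset less.prems by blast
    next
      case 2
      then obtain w where w: "cbox a1 a3 \<inter> T = {w}" using less.prems(1) card_1_singletonE by blast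
      then have "w \<notin> Y" using less.prems(5) by blast
      then show ?thesis using RECT1[OF less.prems(2,3) w less.prems(4) _ less.prems(6-8)] by blast
    next
      case 3
      then obtain u v where uv: "u \<in> cbox a1 a3 \<inter> T" "v \<in> cbox a1 a3 \<inter> T" "u \<noteq> v"
        using less.prems(1) by (metis One_nat_def card_le_Suc0_iff_eq fin2 not_less_eq_eq numeral_2_eq_2)
      show ?thesis
      proof (cases "Re u = Re v")
        case False
        obtain p q where pq: "p \<in> cbox a1 a3 \<inter> T" "q \<in> cbox a1 a3 \<inter> T" "Re p < Re q"
          using uv False by (metis linorder_neqE_linordered_idom)
        obtain t where t: "Re p < t" "t < Re q" "t \<notin> Re ` T"
          using avoid_real[of "Re ` T" "Re p" "Re q"] fin pq by blast
        have ta: "Re a1 < t" "t < Re a3" using t pq by (auto simp: in_cbox_complex_iff)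
        have tT: "\<forall>z\<in>T. Re z \<noteq> t" using t by auto
        define m0 m1 where "m0 = Complex t (Im a1)" and "m1 = Complex t (Im a3)"
        note V = RECT_v[OF ta less.prems(3) less.prems(4) tT, folded m0_def m1_def]
        have sub1: "cbox a1 m1 \<subseteq> cbox a1 a3" "cbox m0 a3 \<subseteq> cbox a1 a3"
          using ta by (auto simp: in_cbox_complex_iff m0_def m1_def)
        have c1: "card (cbox a1 m1 \<inter> T) < n"
        proof -
          have "q \<notin> cbox a1 m1" using t by (simp add: in_cbox_complex_iff m1_def)
          then have "cbox a1 m1 \<inter> T \<subset> cbox a1 a3 \<inter> T"
            using sub1 pq by blast
          then show ?thesis using less.prems(1) fin2 psubset_card_mono by blast
        qed
        have c2: "card (cbox m0 a3 \<inter> T) < n"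
        proof -
          have "p \<notin> cbox m0 a3" using t by (simp add: in_cbox_complex_iff m0_def)
          then have "cbox m0 a3 \<inter> T \<subset> cbox a1 a3 \<inter> T"
            using sub1 pq by blast
          then show ?thesis using less.prems(1) fin2 psubset_card_mono by blast
        qed
        have I1: "PC T \<beta> \<otimes>\<^bsub>Gpi T\<^esub> inv\<^bsub>Gpi T\<^esub> (PC T (rectpath a1 m1)) \<otimes>\<^bsub>Gpi T\<^esub> inv\<^bsub>Gpi T\<^esub> (PC T \<beta>)
            \<in> Mset Y T"
          by (rule less.IH[OF c1 refl]) (use less.prems ta sub1 V in \<open>auto simp: m1_def\<close>)
        define \<beta>' where "\<beta>' = \<beta> +++ linepath a1 m0"
        have pb': "pin (- T) \<beta>'" "pathstart \<beta>' = bp" "pathfinish \<beta>' = m0"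
          using less.prems V(3) by (auto simp: \<beta>'_def intro!: pin_join seg_pin)
        have PCb': "PC T \<beta>' = PC T \<beta> \<otimes>\<^bsub>Gpi T\<^esub> E a1 m0"
          unfolding \<beta>'_def using less.prems V(3) by (simp add: PC_join seg_pin)
        have I2: "PC T \<beta>' \<otimes>\<^bsub>Gpi T\<^esub> inv\<^bsub>Gpi T\<^esub> (PC T (rectpath m0 a3)) \<otimes>\<^bsub>Gpi T\<^esub> inv\<^bsub>Gpi T\<^esub> (PC T \<beta>')
            \<in> Mset Y T"
          by (rule less.IH[OF c2 refl]) (use less.prems ta sub1 V pb' in \<open>auto simp: m0_def\<close>)
        have cc: "E a1 m0 \<in> carrier (Gpi T)" "PC T (rectpath m0 a3) \<in> carrier (Gpi T)"
          "PC T (rectpath a1 m1) \<in> carrier (Gpi T)"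
          using V by (auto intro!: E_carrier PC_carrier simp: pin_def)
        have "PC T \<beta> \<otimes>\<^bsub>Gpi T\<^esub> inv\<^bsub>Gpi T\<^esub> (PC T (rectpath a1 a3)) \<otimes>\<^bsub>Gpi T\<^esub> inv\<^bsub>Gpi T\<^esub> (PC T \<beta>)
          = (PC T \<beta> \<otimes>\<^bsub>Gpi T\<^esub> inv\<^bsub>Gpi T\<^esub> (PC T (rectpath a1 m1)) \<otimes>\<^bsub>Gpi T\<^esub> inv\<^bsub>Gpi T\<^esub> (PC T \<beta>))
            \<otimes>\<^bsub>Gpi T\<^esub> (PC T \<beta>' \<otimes>\<^bsub>Gpi T\<^esub> inv\<^bsub>Gpi T\<^esub> (PC T (rectpath m0 a3)) \<otimes>\<^bsub>Gpi T\<^esub> inv\<^bsub>Gpi T\<^esub> (PC T \<beta>'))"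
          unfolding V(4) PCb' using cc cb by (simp add: m_assoc inv_mult_group cancel_lr cancel_rl)
        then show ?thesis using Mset_mult[OF bpT I1 I2] by simp
      next
        case True
        then have "Im u \<noteq> Im v" using uv(3) by (simp add: complex_eq_iff)
        then obtain p q where pq: "p \<in> cbox a1 a3 \<inter> T" "q \<in> cbox a1 a3 \<inter> T" "Im p < Im q"
          using uv by (metis linorder_neqE_linordered_idom)
        obtain t where t: "Im p < t" "t < Im q" "t \<notin> Im ` T"
          using avoid_real[of "Im ` T" "Im p" "Im q"] fin pq by blast
        have ta: "Im a1 < t" "t < Im a3" using t pq by (auto simp: in_cbox_complex_iff)
        have tT: "\<forall>z\<in>T. Im z \<noteq> t" using t by auto
        define n0 n1 where "n0 = Complex (Re a1) t" and "n1 = Complex (Re a3) t"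
        note V = RECT_h[OF ta less.prems(2) less.prems(4) tT, folded n0_def n1_def]
        have sub1: "cbox a1 n1 \<subseteq> cbox a1 a3" "cbox n0 a3 \<subseteq> cbox a1 a3"
          using ta by (auto simp: in_cbox_complex_iff n0_def n1_def)
        have c1: "card (cbox a1 n1 \<inter> T) < n"
        proof -
          have "q \<notin> cbox a1 n1" using t by (simp add: in_cbox_complex_iff n1_def)
          then have "cbox a1 n1 \<inter> T \<subset> cbox a1 a3 \<inter> T"
            using sub1 pq by blast
          then show ?thesis using less.prems(1) fin2 psubset_card_mono by blast
        qed
        have c2: "card (cbox n0 a3 \<inter> T) < n"
        proof -
          have "p \<notin> cbox n0 a3" using t by (simp add: in_cbox_complex_iff n0_def)
          then have "cbox n0 a3 \<inter> T \<subset> cbox a1 a3 \<inter> T"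
            using sub1 pq by blast
          then show ?thesis using less.prems(1) fin2 psubset_card_mono by blast
        qed
        have I1: "PC T \<beta> \<otimes>\<^bsub>Gpi T\<^esub> inv\<^bsub>Gpi T\<^esub> (PC T (rectpath a1 n1)) \<otimes>\<^bsub>Gpi T\<^esub> inv\<^bsub>Gpi T\<^esub> (PC T \<beta>)
            \<in> Mset Y T"
          by (rule less.IH[OF c1 refl]) (use less.prems ta sub1 V in \<open>auto simp: n1_def\<close>)
        define \<beta>' where "\<beta>' = \<beta> +++ linepath a1 n0"
        have pb': "pin (- T) \<beta>'" "pathstart \<beta>' = bp" "pathfinish \<beta>' = n0"
          using less.prems V(3) by (auto simp: \<beta>'_def intro!: pin_join seg_pin)
        have PCb': "PC T \<beta>' = PC T \<beta> \<otimes>\<^bsub>Gpi T\<^esub> E a1 n0"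
          unfolding \<beta>'_def using less.prems V(3) by (simp add: PC_join seg_pin)
        have I2: "PC T \<beta>' \<otimes>\<^bsub>Gpi T\<^esub> inv\<^bsub>Gpi T\<^esub> (PC T (rectpath n0 a3)) \<otimes>\<^bsub>Gpi T\<^esub> inv\<^bsub>Gpi T\<^esub> (PC T \<beta>')
            \<in> Mset Y T"
          by (rule less.IH[OF c2 refl]) (use less.prems ta sub1 V pb' in \<open>auto simp: n0_def\<close>)
        have cc: "E a1 n0 \<in> carrier (Gpi T)" "PC T (rectpath n0 a3) \<in> carrier (Gpi T)"
          "PC T (rectpath a1 n1) \<in> carrier (Gpi T)"
          using V by (auto intro!: E_carrier PC_carrier simp: pin_def)
        have "PC T \<beta> \<otimes>\<^bsub>Gpi T\<^esub> inv\<^bsub>Gpi T\<^esub> (PC T (rectpath a1 a3)) \<otimes>\<^bsub>Gpi T\<^esub> inv\<^bsub>Gpi T\<^esub> (PC T \<beta>)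
          = (PC T \<beta>' \<otimes>\<^bsub>Gpi T\<^esub> inv\<^bsub>Gpi T\<^esub> (PC T (rectpath n0 a3)) \<otimes>\<^bsub>Gpi T\<^esub> inv\<^bsub>Gpi T\<^esub> (PC T \<beta>'))
            \<otimes>\<^bsub>Gpi T\<^esub> (PC T \<beta> \<otimes>\<^bsub>Gpi T\<^esub> inv\<^bsub>Gpi T\<^esub> (PC T (rectpath a1 n1)) \<otimes>\<^bsub>Gpi T\<^esub> inv\<^bsub>Gpi T\<^esub> (PC T \<beta>))"
          unfolding V(4) PCb' using cc cb by (simp add: m_assoc inv_mult_group cancel_lr cancel_rl)
        then show ?thesis using Mset_mult[OF bpT I2 I1] by simp
      qed
    qed
  qed
  then show ?thesis using assms by blast
qed

end

lemma retract_one: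
  fixes U A :: "complex set"
  assumes U: "convex U" "open U" "bounded U" "z \<in> U" and zA: "z \<notin> A" and fr: "frontier U \<subseteq> A"
   and h: "homotopic_paths A g1 g2" and g: "path_image g1 \<subseteq> A - U" "path_image g2 \<subseteq> A - U"
  shows "homotopic_paths (A - U) g1 g2"
proof -
  have ri: "rel_interior U = U" using rel_interior_open[OF U(2)] .
  have ah: "affine hull U = UNIV" using U(2,4) affine_hull_open by blast
  have rf: "rel_frontier U = frontier U"
    using ri U(2) by (simp add: rel_frontier_def frontier_def interior_open)
  have "rel_frontier U retract_of (affine hull U - {z})"
    using U ri by (intro rel_frontier_retract_of_punctured_affine_hull) auto
  then obtain r where r: "continuous_on (- {z}) r" "r \<in> (- {z}) \<rightarrow> frontier U" "\<And>x. x \<in> frontier U \<Longrightarrow> r x = x"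
    unfolding retract_of_def retraction_def rf ah by (auto simp: Compl_eq_Diff_UNIV)
  define R where "R x = (if x \<in> U then r x else x)" for x
  have AU: "A = (A \<inter> closure U) \<union> (A \<inter> - U)" using closure_subset by blast
  have cont: "continuous_on A R"
  proof -
    have "continuous_on ((A \<inter> closure U) \<union> (A \<inter> - U)) (\<lambda>x. if x \<in> U then r x else id x)"
    proof (rule continuous_on_cases_local)
      show "closedin (top_of_set (A \<inter> closure U \<union> A \<inter> - U)) (A \<inter> closure U)"
        using AU[symmetric] closedin_closed_Int[of "closure U" A] by simp
      show "closedin (top_of_set (A \<inter> closure U \<union> A \<inter> - U)) (A \<inter> - U)"
        using AU[symmetric] closedin_closed_Int[of "- U" A] U(2) by (simp add: closed_Compl)
      show "continuous_on (A \<inter> closure U) r" using zA by (rule_tac continuous_on_subset[OF r(1)]) auto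
      show "continuous_on (A \<inter> - U) id" by (simp add: id_def)
      fix x assume "x \<in> A \<inter> closure U \<and> x \<notin> U \<or> x \<in> A \<inter> - U \<and> x \<in> U"
      then have "x \<in> frontier U" using U(2) by (auto simp: frontier_def interior_open)
      then show "r x = id x" using r(3) by simp
    qed
    then show ?thesis using AU unfolding R_def[abs_def] id_def by simp
  qed
  have into: "R \<in> A \<rightarrow> A - U"
  proof
    fix x assume x: "x \<in> A"
    show "R x \<in> A - U"
    proof (cases "x \<in> U")
      case True
      then have "r x \<in> frontier U" using r(2) zA x by auto
      then show ?thesis using True fr U(2) by (auto simp: R_def frontier_def interior_open)
    next
      case False then show ?thesis using x by (simp add: R_def)
    qed
  qed
  have h2: "homotopic_paths (A - U) (R \<circ> g1) (R \<circ> g2)"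
    by (rule homotopic_paths_continuous_image[OF h cont into])
  have e1: "homotopic_paths (A - U) g1 (R \<circ> g1)"
  proof (rule homotopic_paths_eq)
    show "path g1" using h homotopic_paths_imp_path by blast
    show "path_image g1 \<subseteq> A - U" using g(1) .
    fix t :: real assume "t \<in> {0..1}"
    then have "g1 t \<notin> U" using g(1) unfolding path_image_def by blast
    then show "g1 t = (R \<circ> g1) t" by (simp add: R_def)
  qed
  have e2: "homotopic_paths (A - U) g2 (R \<circ> g2)"
  proof (rule homotopic_paths_eq)
    show "path g2" using h homotopic_paths_imp_path by blast
    show "path_image g2 \<subseteq> A - U" using g(2) .
    fix t :: real assume "t \<in> {0..1}"
    then have "g2 t \<notin> U" using g(2) unfolding path_image_def by blast
    then show "g2 t = (R \<circ> g2) t" by (simp add: R_def)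
  qed
  show ?thesis using e1 h2 e2 by (meson homotopic_paths_sym homotopic_paths_trans)
qed

definition adm :: "complex set \<Rightarrow> (complex \<Rightarrow> complex set) \<Rightarrow> bool" where
  "adm T U \<longleftrightarrow> (\<forall>z\<in>T. convex (U z) \<and> open (U z) \<and> bounded (U z) \<and> U z \<inter> T = {z} \<and>
      (\<forall>z'\<in>T. z' \<noteq> z \<longrightarrow> closure (U z) \<inter> closure (U z') = {}))"

lemma adapted_adm: "adapted Y P U \<Longrightarrow> adm P U"
  unfolding adapted_def adm_def
  by (metis bounded_subset closure_subset compact_imp_bounded)

lemma adm_sub: "adm T U \<Longrightarrow> T \<subseteq> \<Union>(U ` T)"
  unfolding adm_def by blast

lemma adm_frontier:
  assumes "adm T U" "z \<in> T" "z' \<in> T"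
  shows "frontier (U z) \<inter> U z' = {}" "frontier (U z) \<inter> T = {}"
proof -
  have o: "open (U z)" "U z \<inter> T = {z}" "open (U z')" "U z' \<inter> T = {z'}" using assms unfolding adm_def by auto
  show "frontier (U z) \<inter> U z' = {}"
  proof (cases "z = z'")
    case True then show ?thesis using o by (auto simp: frontier_def interior_open)
  next
    case False
    then have "closure (U z) \<inter> closure (U z') = {}" using assms unfolding adm_def by auto
    then show ?thesis using closure_subset[of "U z'"] by (auto simp: frontier_def)
  qed
  show "frontier (U z) \<inter> T = {}"
  proof (rule ccontr)
    assume "frontier (U z) \<inter> T \<noteq> {}"
    then obtain t where t: "t \<in> frontier (U z)" "t \<in> T" by blast
    have tU: "t \<in> U t" using assms(1) t(2) unfolding adm_def by blast
    show False
    proof (cases "t = z")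
      case True then show False using t(1) o(1) tU by (simp add: frontier_def interior_open)
    next
      case False
      then have "closure (U z) \<inter> closure (U t) = {}" using assms(1,2) t(2) unfolding adm_def by auto
      moreover have "t \<in> closure (U z)" using t(1) by (simp add: frontier_def)
      moreover have "t \<in> closure (U t)" using tU closure_subset by blast
      ultimately show False by blast
    qed
  qed
qed

lemma retract_multi:
  assumes fin: "finite T" and adm: "adm T U" and h: "homotopic_paths (- T) g1 g2"
    and g: "path_image g1 \<subseteq> - \<Union>(U ` T)" "path_image g2 \<subseteq> - \<Union>(U ` T)"
  shows "homotopic_paths (- \<Union>(U ` T)) g1 g2"
proof -
  have TU: "T \<subseteq> \<Union>(U ` T)" using adm_sub[OF adm] .
  have "- \<Union>(U ` T) \<subseteq> - T" using TU by (rule Compl_anti_mono)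
  then have gT: "path_image g1 \<subseteq> - T" "path_image g2 \<subseteq> - T" using g by (meson order_trans)+
  have "S \<subseteq> T \<Longrightarrow> homotopic_paths (- T - \<Union>(U ` S)) g1 g2" if "finite S" for S
    using that
  proof (induction S rule: finite_induct)
    case empty then show ?case using h by simp
  next
    case (insert z0 S)
    have z0: "z0 \<in> T" using insert.prems by auto
    have u: "convex (U z0)" "open (U z0)" "bounded (U z0)" "z0 \<in> U z0"
      using adm z0 unfolding adm_def by auto
    have fr: "frontier (U z0) \<subseteq> - T - \<Union>(U ` S)"
      using adm_frontier[OF adm z0] insert.prems by blast
    have "homotopic_paths (- T - \<Union>(U ` S) - U z0) g1 g2"
      by (rule retract_one[OF u _ fr insert.IH]) (use z0 insert.prems g gT in auto)
    moreover have "- T - \<Union>(U ` S) - U z0 = - T - \<Union>(U ` insert z0 S)" by auto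
    ultimately show ?case by simp
  qed
  moreover have "- T - \<Union>(U ` T) = - \<Union>(U ` T)" using TU by blast
  ultimately show ?thesis using fin by (metis subset_refl)
qed


lemma iota_cls:
  assumes fin: "finite P'" and adm: "adm P' U" and P'': "P'' \<subseteq> \<Union>(U ` P')"
    and g: "path g" "path_image g \<subseteq> - \<Union>(U ` P')" and x: "x = cls P' g"
  shows "iota U P' P'' x = cls P'' g"
proof
  have TU: "P' \<subseteq> \<Union>(U ` P')" using adm_sub[OF adm] .
  have sub: "- \<Union>(U ` P') \<subseteq> - P''" using P'' by blast
  show "iota U P' P'' x \<subseteq> cls P'' g"
  proof
    fix h assume "h \<in> iota U P' P'' x"
    then obtain g1 where g1: "homotopic_paths (- P') g g1" "path_image g1 \<subseteq> - \<Union>(U ` P')"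
      "homotopic_paths (- P'') g1 h"
      unfolding iota_def x cls_def by blast
    have "homotopic_paths (- \<Union>(U ` P')) g g1"
      by (rule retract_multi[OF fin adm g1(1) g(2) g1(2)])
    then have "homotopic_paths (- P'') g g1" using homotopic_paths_subset sub by blast
    then show "h \<in> cls P'' g" using g1(3) unfolding cls_def by (blast intro: homotopic_paths_trans)
  qed
  show "cls P'' g \<subseteq> iota U P' P'' x"
  proof
    fix h assume h: "h \<in> cls P'' g"
    have "path_image g \<subseteq> - P'" using g(2) TU by blast
    then have "g \<in> x" unfolding x cls_def using g(1) by (simp add: homotopic_paths_refl)
    then show "h \<in> iota U P' P'' x" using h g unfolding iota_def cls_def by blast
  qed
qed

lemma iota_comp:
  assumes fin: "finite P'" and adm: "adm P' U'"
    and s1: "P' \<subseteq> \<Union>(U ` P)" and s2: "\<Union>(U' ` P') \<subseteq> \<Union>(U ` P)" and s3: "P'' \<subseteq> \<Union>(U' ` P')"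
  shows "iota U P P'' x = iota U' P' P'' (iota U P P' x)"
proof
  show "iota U P P'' x \<subseteq> iota U' P' P'' (iota U P P' x)"
  proof
    fix h assume "h \<in> iota U P P'' x"
    then obtain g where g: "g \<in> x" "path_image g \<subseteq> - \<Union>(U ` P)" "homotopic_paths (- P'') g h"
      unfolding iota_def by blast
    have "path g" using g(3) homotopic_paths_imp_path by blast
    moreover have "path_image g \<subseteq> - P'" using g(2) s1 by blast
    ultimately have hr: "homotopic_paths (- P') g g" by (simp add: homotopic_paths_refl)
    have "g \<in> iota U P P' x" unfolding iota_def using g(1,2) hr by blast
    moreover have "path_image g \<subseteq> - \<Union>(U' ` P')" using g(2) s2 by blast
    ultimately show "h \<in> iota U' P' P'' (iota U P P' x)" using g(3) unfolding iota_def by blast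
  qed
  show "iota U' P' P'' (iota U P P' x) \<subseteq> iota U P P'' x"
  proof
    fix h assume "h \<in> iota U' P' P'' (iota U P P' x)"
    then obtain g' g where g': "path_image g' \<subseteq> - \<Union>(U' ` P')" "homotopic_paths (- P'') g' h"
      and g: "g \<in> x" "path_image g \<subseteq> - \<Union>(U ` P)" "homotopic_paths (- P') g g'"
      unfolding iota_def by blast
    have "path_image g \<subseteq> - \<Union>(U' ` P')" using g(2) s2 by blast
    then have "homotopic_paths (- \<Union>(U' ` P')) g g'"
      by (rule retract_multi[OF fin adm g(3) _ g'(1)])
    then have "homotopic_paths (- P'') g g'" using homotopic_paths_subset s3 by blast
    then have "homotopic_paths (- P'') g h" using g'(2) by (rule homotopic_paths_trans)
    then show "h \<in> iota U P P'' x" using g unfolding iota_def by blast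
  qed
qed

definition sep :: "complex set \<Rightarrow> real \<Rightarrow> bool" where
  "sep T \<rho> \<longleftrightarrow> \<rho> > 0 \<and> (\<forall>z\<in>T. \<forall>z'\<in>T. z \<noteq> z' \<longrightarrow> dist z z' > 4 * \<rho>)"

lemma sep_adm: "sep T \<rho> \<Longrightarrow> adm T (\<lambda>z. ball z \<rho>)"
proof -
  assume s: "sep T \<rho>"
  then have \<rho>: "\<rho> > 0" and d: "\<And>z z'. z \<in> T \<Longrightarrow> z' \<in> T \<Longrightarrow> z \<noteq> z' \<Longrightarrow> dist z z' > 4 * \<rho>"
    by (auto simp: sep_def)
  show ?thesis unfolding adm_def
  proof (intro ballI conjI impI)
    fix z assume z: "z \<in> T"
    show "convex (ball z \<rho>)" "open (ball z \<rho>)" "bounded (ball z \<rho>)" by auto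
    show "ball z \<rho> \<inter> T = {z}"
    proof
      show "ball z \<rho> \<inter> T \<subseteq> {z}"
      proof
        fix w assume w: "w \<in> ball z \<rho> \<inter> T"
        show "w \<in> {z}"
        proof (rule ccontr)
          assume "w \<notin> {z}"
          then have "dist z w > 4 * \<rho>" using d[OF z] w by auto
          then show False using w \<rho> by auto
        qed
      qed
      show "{z} \<subseteq> ball z \<rho> \<inter> T" using z \<rho> by auto
    qed
    fix z' assume z': "z' \<in> T" "z' \<noteq> z"
    have "dist z z' > 4 * \<rho>" using d[OF z z'(1)] z'(2) by auto
    then show "closure (ball z \<rho>) \<inter> closure (ball z' \<rho>) = {}"
      using \<rho> dist_triangle[of z z' ] by (auto simp: dist_commute) (smt (verit) dist_triangle2)
  qed
qed

lemma radial_step: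
  fixes A :: "complex set" and z0 :: complex
  assumes \<rho>: "\<rho> > 0" and z0: "z0 \<notin> A" and cb: "cball z0 \<rho> - {z0} \<subseteq> A"
    and g: "path g" "path_image g \<subseteq> A" "pathstart g \<notin> ball z0 \<rho>" "pathfinish g \<notin> ball z0 \<rho>"
  shows "\<exists>g'. path g' \<and> path_image g' \<subseteq> A - ball z0 \<rho> \<and> homotopic_paths A g g'"
proof -
  define F where "F w = z0 + of_real (\<rho> / cmod (w - z0)) * (w - z0)" for w
  define R where "R w = (if dist w z0 < \<rho> then F w else w)" for w
  have Fs: "F w \<in> sphere z0 \<rho>" if "w \<noteq> z0" for w
  proof -
    have "cmod (w - z0) > 0" using that by simp
    then have "cmod (of_real (\<rho> / cmod (w - z0)) * (w - z0)) = \<rho>"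
      using \<rho> by (simp add: norm_mult norm_divide abs_of_pos)
    then show ?thesis by (simp add: F_def dist_norm)
  qed
  have sphA: "sphere z0 \<rho> \<subseteq> A - ball z0 \<rho>" using cb \<rho> by auto
  have AU: "A = (A \<inter> cball z0 \<rho>) \<union> (A \<inter> - ball z0 \<rho>)" by auto
  have cont: "continuous_on A R"
  proof -
    have "continuous_on ((A \<inter> cball z0 \<rho>) \<union> (A \<inter> - ball z0 \<rho>)) (\<lambda>w. if dist w z0 < \<rho> then F w else id w)"
    proof (rule continuous_on_cases_local)
      show "closedin (top_of_set (A \<inter> cball z0 \<rho> \<union> A \<inter> - ball z0 \<rho>)) (A \<inter> cball z0 \<rho>)"
        using AU[symmetric] closedin_closed_Int[of "cball z0 \<rho>" A] by simp
      show "closedin (top_of_set (A \<inter> cball z0 \<rho> \<union> A \<inter> - ball z0 \<rho>)) (A \<inter> - ball z0 \<rho>)"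
        using AU[symmetric] closedin_closed_Int[of "- ball z0 \<rho>" A] by (simp add: closed_Compl)
      have "\<And>w. w \<in> A \<inter> cball z0 \<rho> \<Longrightarrow> cmod (w - z0) \<noteq> 0" using z0 by auto
      then show "continuous_on (A \<inter> cball z0 \<rho>) F" unfolding F_def
        by (intro continuous_intros) auto
      show "continuous_on (A \<inter> - ball z0 \<rho>) id" by (simp add: id_def)
      fix w assume "w \<in> A \<inter> cball z0 \<rho> \<and> \<not> dist w z0 < \<rho> \<or> w \<in> A \<inter> - ball z0 \<rho> \<and> dist w z0 < \<rho>"
      then have "dist w z0 = \<rho>" by (auto simp: dist_commute)
      then show "F w = id w" using \<rho> by (simp add: F_def dist_norm)
    qed
    then show ?thesis using AU unfolding R_def[abs_def] id_def by simp
  qed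
  have into: "R \<in> A \<rightarrow> A - ball z0 \<rho>"
  proof
    fix w assume w: "w \<in> A"
    show "R w \<in> A - ball z0 \<rho>"
    proof (cases "dist w z0 < \<rho>")
      case True
      have "w \<noteq> z0" using w z0 by auto
      then have "F w \<in> sphere z0 \<rho>" by (rule Fs)
      then show ?thesis using True sphA by (auto simp: R_def)
    next
      case False then show ?thesis using w by (auto simp: R_def dist_commute)
    qed
  qed
  have seg: "closed_segment w (R w) \<subseteq> A" if w: "w \<in> A" for w
  proof (cases "dist w z0 < \<rho>")
    case False then show ?thesis using w by (simp add: R_def)
  next
    case True
    have wz: "w \<noteq> z0" using w z0 by auto
    have Rw: "R w = F w" using True by (simp add: R_def)
    have "closed_segment w (F w) \<subseteq> cball z0 \<rho>"
      using True Fs[OF wz] by (intro closed_segment_subset) (auto simp: dist_commute)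
    moreover have "z0 \<notin> closed_segment w (F w)"
    proof
      assume "z0 \<in> closed_segment w (F w)"
      then obtain u where u: "0 \<le> u" "u \<le> 1" "z0 = (1 - u) *\<^sub>R w + u *\<^sub>R F w"
        by (auto simp: closed_segment_def)
      define lam where "lam = \<rho> / cmod (w - z0)"
      have lam: "lam \<ge> 1" using True wz \<rho> by (simp add: lam_def dist_norm field_simps)
      have "0 = (1 - u) *\<^sub>R (w - z0) + u *\<^sub>R (F w - z0)"
        using u(3) by (simp add: algebra_simps)
      also have "\<dots> = of_real ((1 - u) + u * lam) * (w - z0)"
        by (simp add: F_def lam_def scaleR_conv_of_real algebra_simps)
      finally have "of_real ((1 - u) + u * lam) * (w - z0) = 0" by simp
      moreover have "(1 - u) + u * lam > 0"
      proof -
        have "u * 1 \<le> u * lam" using mult_left_mono[OF lam u(1)] .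
        then show ?thesis by linarith
      qed
      ultimately show False
      proof -
        assume e: "of_real ((1 - u) + u * lam) * (w - z0) = 0" and pos: "(1 - u) + u * lam > 0"
        define c where "c = (1 - u) + u * lam"
        have "complex_of_real c * (w - z0) = 0" using e by (simp only: c_def)
        then have "complex_of_real c = 0 \<or> w - z0 = 0" by (simp only: mult_eq_0_iff)
        then have "complex_of_real c = 0" using wz by simp
        then have "c = 0" by simp
        then show False using pos c_def by simp
      qed
    qed
    ultimately have "closed_segment w (F w) \<subseteq> cball z0 \<rho> - {z0}" by blast
    then show ?thesis unfolding Rw using cb by (rule order_trans)
  qed
  define g' where "g' = R \<circ> g"
  have pg': "path g'" unfolding g'_def path_def
    using g(1,2) cont unfolding path_def path_image_def by (intro continuous_on_compose) (auto elim: continuous_on_subset)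
  have ig': "path_image g' \<subseteq> A - ball z0 \<rho>"
    using into g(2) unfolding g'_def path_image_def by auto
  have h: "homotopic_paths A g g'"
  proof (rule homotopic_paths_linear[OF g(1) pg'])
    show "pathstart g' = pathstart g" using g(3) by (auto simp: g'_def pathstart_def R_def dist_commute)
    show "pathfinish g' = pathfinish g" using g(4) by (auto simp: g'_def pathfinish_def R_def dist_commute)
    fix t :: real assume "t \<in> {0..1}"
    then have "g t \<in> A" using g(2) unfolding path_image_def by blast
    then show "closed_segment (g t) (g' t) \<subseteq> A" using seg by (simp add: g'_def)
  qed
  show ?thesis using pg' ig' h by blast
qed

lemma ball_avoid:
  assumes fin: "finite T" and s: "sep T \<rho>"
    and g: "path g" "path_image g \<subseteq> - T" "pathstart g \<notin> (\<Union>z\<in>T. ball z \<rho>)" "pathfinish g \<notin> (\<Union>z\<in>T. ball z \<rho>)"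
  shows "\<exists>g'. path g' \<and> path_image g' \<subseteq> - (\<Union>z\<in>T. ball z \<rho>) \<and> homotopic_paths (- T) g g'"
proof -
  have \<rho>: "\<rho> > 0" and d: "\<And>z z'. z \<in> T \<Longrightarrow> z' \<in> T \<Longrightarrow> z \<noteq> z' \<Longrightarrow> dist z z' > 4 * \<rho>"
    using s by (auto simp: sep_def)
  have "S \<subseteq> T \<Longrightarrow> \<exists>g'. path g' \<and> path_image g' \<subseteq> - T - (\<Union>z\<in>S. ball z \<rho>) \<and> homotopic_paths (- T) g g'"
    if "finite S" for S
    using that
  proof (induction S rule: finite_induct)
    case empty then show ?case using g by (auto intro: homotopic_paths_refl)
  next
    case (insert z0 S)
    obtain g1 where g1: "path g1" "path_image g1 \<subseteq> - T - (\<Union>z\<in>S. ball z \<rho>)" "homotopic_paths (- T) g g1"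
      using insert by auto
    have z0: "z0 \<in> T" using insert.prems by auto
    have cb: "cball z0 \<rho> - {z0} \<subseteq> - T - (\<Union>z\<in>S. ball z \<rho>)"
    proof
      fix w assume w: "w \<in> cball z0 \<rho> - {z0}"
      have "w \<notin> T"
      proof
        assume "w \<in> T"
        then have "dist z0 w > 4 * \<rho>" using d[OF z0] w by auto
        then show False using w \<rho> by auto
      qed
      moreover have "w \<notin> ball z \<rho>" if "z \<in> S" for z
      proof -
        have "z \<noteq> z0" "z \<in> T" using that insert by auto
        then have "dist z0 z > 4 * \<rho>" using d[OF z0] by auto
        then show ?thesis using w \<rho> dist_triangle[of z0 z w] by (auto simp: dist_commute)
      qed
      ultimately show "w \<in> - T - (\<Union>z\<in>S. ball z \<rho>)" by auto
    qed
    have e: "pathstart g1 \<notin> ball z0 \<rho>" "pathfinish g1 \<notin> ball z0 \<rho>"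
      using g(3,4) z0 homotopic_paths_imp_pathstart[OF g1(3)] homotopic_paths_imp_pathfinish[OF g1(3)] by auto
    obtain g2 where g2: "path g2" "path_image g2 \<subseteq> - T - (\<Union>z\<in>S. ball z \<rho>) - ball z0 \<rho>"
       "homotopic_paths (- T - (\<Union>z\<in>S. ball z \<rho>)) g1 g2"
      using radial_step[OF \<rho> _ cb g1(1) g1(2) e] z0 by blast
    have "homotopic_paths (- T) g1 g2" using g2(3) homotopic_paths_subset by blast
    then have "homotopic_paths (- T) g g2" using g1(3) homotopic_paths_trans by blast
    moreover have "path_image g2 \<subseteq> - T - (\<Union>z\<in>insert z0 S. ball z \<rho>)" using g2(2) by auto
    ultimately show ?case using g2(1) by blast
  qed
  from this[OF fin subset_refl] show ?thesis by auto
qed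

locale BallSit =
  fixes P1 P2 :: "complex set" and \<rho> :: real and Y :: "complex set"
  assumes fin1: "finite P1" and fin2: "finite P2" and sep: "sep P1 \<rho>"
    and bpc: "\<forall>z\<in>P1. bp \<notin> cball z (2 * \<rho>)"
    and P2sub: "P2 \<subseteq> (\<Union>z\<in>P1. ball z \<rho>)"
    and Ysep: "\<forall>z\<in>P1. z \<notin> Y \<longrightarrow> cball z (2 * \<rho>) \<inter> Y = {}"
begin

abbreviation "UB \<equiv> (\<lambda>z. ball z \<rho>)"

lemma rho: "\<rho> > 0" using sep by (simp add: sep_def)

lemma far: "z \<in> P1 \<Longrightarrow> z' \<in> P1 \<Longrightarrow> z \<noteq> z' \<Longrightarrow> dist z z' > 4 * \<rho>"
  using sep by (simp add: sep_def)

lemma admB: "adm P1 UB" using sep_adm[OF sep] .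

lemma bp1: "bp \<notin> P1" using bpc rho by fastforce

lemma bpB: "bp \<notin> (\<Union>z\<in>P1. ball z \<rho>)"
proof
  assume "bp \<in> (\<Union>z\<in>P1. ball z \<rho>)"
  then obtain z where "z \<in> P1" "dist z bp < \<rho>" by auto
  then have "bp \<in> cball z (2 * \<rho>)" using rho by simp
  then show False using bpc \<open>z \<in> P1\<close> by blast
qed

lemma bp2: "bp \<notin> P2" using bpB P2sub by blast

lemma P1sub: "P1 \<subseteq> (\<Union>z\<in>P1. ball z \<rho>)" using rho by auto

lemma rep_avoid:
  assumes "x \<in> carrier (Gpi P1)"
  obtains g where "loopat P1 g" "path_image g \<subseteq> - (\<Union>z\<in>P1. ball z \<rho>)" "x = cls P1 g"
proof -
  obtain g0 where g0: "x = cls P1 g0" "loopat P1 g0" using assms by (auto simp: carrier_Gpi)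
  obtain g where g: "path g" "path_image g \<subseteq> - (\<Union>z\<in>P1. ball z \<rho>)" "homotopic_paths (- P1) g0 g"
    using ball_avoid[OF fin1 sep, of g0] g0(2) bpB unfolding loopat_def by auto
  have "loopat P1 g" using g g0(2) P1sub homotopic_paths_imp_pathstart homotopic_paths_imp_pathfinish
    unfolding loopat_def by fastforce
  moreover have "x = cls P1 g" using g0(1) cls_eqI[OF g(3)] by simp
  ultimately show ?thesis using that g by blast
qed

definition io where "io x = iota UB P1 P2 x"

lemma io_cls:
  assumes "path g" "path_image g \<subseteq> - (\<Union>z\<in>P1. ball z \<rho>)"
  shows "io (cls P1 g) = cls P2 g"
  unfolding io_def by (rule iota_cls[OF fin1 admB P2sub assms refl])

lemma io_carrier: "x \<in> carrier (Gpi P1) \<Longrightarrow> io x \<in> carrier (Gpi P2)"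
proof -
  assume x: "x \<in> carrier (Gpi P1)"
  obtain g where g: "loopat P1 g" "path_image g \<subseteq> - (\<Union>z\<in>P1. ball z \<rho>)" "x = cls P1 g"
    using rep_avoid[OF x] .
  have "loopat P2 g" using g P2sub unfolding loopat_def by blast
  then show ?thesis using io_cls[of g] g unfolding loopat_def carrier_Gpi by auto
qed

lemma io_one: "io \<one>\<^bsub>Gpi P1\<^esub> = \<one>\<^bsub>Gpi P2\<^esub>"
  unfolding one_Gpi using io_cls[of "linepath bp bp"] bpB by simp

lemma io_mult:
  assumes "x \<in> carrier (Gpi P1)" "y \<in> carrier (Gpi P1)"
  shows "io (x \<otimes>\<^bsub>Gpi P1\<^esub> y) = io x \<otimes>\<^bsub>Gpi P2\<^esub> io y"
proof -
  obtain g where g: "loopat P1 g" "path_image g \<subseteq> - (\<Union>z\<in>P1. ball z \<rho>)" "x = cls P1 g"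
    using rep_avoid[OF assms(1)] .
  obtain k where k: "loopat P1 k" "path_image k \<subseteq> - (\<Union>z\<in>P1. ball z \<rho>)" "y = cls P1 k"
    using rep_avoid[OF assms(2)] .
  have gk: "path_image (g +++ k) \<subseteq> - (\<Union>z\<in>P1. ball z \<rho>)" using g k
    by (auto simp: loopat_def path_image_join)
  have sub: "- (\<Union>z\<in>P1. ball z \<rho>) \<subseteq> - P2" using P2sub by (rule Compl_anti_mono)
  have g2: "path_image g \<subseteq> - P2" "path_image k \<subseteq> - P2"
    using order_trans[OF g(2) sub] order_trans[OF k(2) sub] by auto
  have "x \<otimes>\<^bsub>Gpi P1\<^esub> y = cls P1 (g +++ k)"
    using g k by (simp add: mult_Gpi loopat_def)
  then have "io (x \<otimes>\<^bsub>Gpi P1\<^esub> y) = cls P2 (g +++ k)"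
    using io_cls[OF _ gk] g k by (simp add: loopat_def)
  also have "\<dots> = cls P2 g \<otimes>\<^bsub>Gpi P2\<^esub> cls P2 k"
    using g k g2 by (subst mult_Gpi) (auto simp: loopat_def)
  also have "\<dots> = io x \<otimes>\<^bsub>Gpi P2\<^esub> io y"
    using io_cls g k by (simp add: loopat_def)
  finally show ?thesis .
qed

lemma io_foldr:
  assumes "set gs \<subseteq> carrier (Gpi P1)"
  shows "io (foldr (\<lambda>a b. a \<otimes>\<^bsub>Gpi P1\<^esub> b) gs \<one>\<^bsub>Gpi P1\<^esub>)
       = foldr (\<lambda>a b. a \<otimes>\<^bsub>Gpi P2\<^esub> b) (map io gs) \<one>\<^bsub>Gpi P2\<^esub>"
  using assms
proof (induction gs)
  case Nil then show ?case by (simp add: io_one)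
next
  case (Cons a gs)
  then show ?case using foldr_closed[OF bp1, of gs] by (simp add: io_mult)
qed

lemma cb2_P1: "z \<in> P1 \<Longrightarrow> cball z (2 * \<rho>) \<inter> P1 = {z}"
proof -
  assume z: "z \<in> P1"
  have "w = z" if "w \<in> cball z (2 * \<rho>)" "w \<in> P1" for w
  proof (rule ccontr)
    assume "w \<noteq> z"
    then have "dist z w > 4 * \<rho>" using far[OF z that(2)] by auto
    then show False using that(1) rho by simp
  qed
  then show ?thesis using z rho by auto
qed

lemma cb2_balls: "z \<in> P1 \<Longrightarrow> z' \<in> P1 \<Longrightarrow> z' \<noteq> z \<Longrightarrow> cball z (2 * \<rho>) \<inter> cball z' \<rho> = {}"
proof -
  assume z: "z \<in> P1" "z' \<in> P1" "z' \<noteq> z"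
  then have d: "dist z z' > 4 * \<rho>" using far by auto
  show ?thesis
  proof (rule ccontr)
    assume "cball z (2 * \<rho>) \<inter> cball z' \<rho> \<noteq> {}"
    then obtain w where "dist z w \<le> 2 * \<rho>" "dist z' w \<le> \<rho>" by auto
    then show False using d dist_triangle[of z z' w] using rho by (simp add: dist_commute)
  qed
qed

lemma cb2_avoid:
  assumes z: "z \<in> P1" and w: "w \<in> cball z (2 * \<rho>)" "w \<notin> ball z \<rho>"
  shows "w \<notin> (\<Union>z\<in>P1. ball z \<rho>)"
proof
  assume "w \<in> (\<Union>z\<in>P1. ball z \<rho>)"
  then obtain z' where z': "z' \<in> P1" "w \<in> ball z' \<rho>" by auto
  show False
  proof (cases "z' = z")
    case True then show False using z' w by simp
  next
    case False then show False using cb2_balls[OF z z'(1) False] w z' by auto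
  qed
qed

lemma sq_bounds:
  assumes "\<bar>Re (w - z)\<bar> \<le> \<rho>" "\<bar>Im (w - z)\<bar> \<le> \<rho>"
  shows "w \<in> cball z (2 * \<rho>)"
proof -
  have "cmod (w - z) \<le> \<bar>Re (w - z)\<bar> + \<bar>Im (w - z)\<bar>" by (rule cmod_le)
  then show ?thesis using assms by (simp add: dist_norm norm_minus_commute)
qed

lemma rect_geom:
  assumes z: "z \<in> P1"
  defines "a1 \<equiv> z - Complex \<rho> \<rho>" and "a3 \<equiv> z + Complex \<rho> \<rho>"
  shows "Re a1 < Re a3" "Im a1 < Im a3" "cbox a1 a3 \<subseteq> cball z (2 * \<rho>)"
    "path_image (rectpath a1 a3) \<subseteq> cball z (2 * \<rho>) - ball z \<rho>"
    "path_image (rectpath a1 a3) \<subseteq> - (\<Union>z\<in>P1. ball z \<rho>)"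
    "z \<in> box a1 a3" "a1 \<in> cball z (2 * \<rho>) - ball z \<rho>"
proof -
  show l: "Re a1 < Re a3" "Im a1 < Im a3" using rho by (auto simp: a1_def a3_def)
  show cb: "cbox a1 a3 \<subseteq> cball z (2 * \<rho>)"
  proof
    fix w assume "w \<in> cbox a1 a3"
    then have "\<bar>Re (w - z)\<bar> \<le> \<rho>" "\<bar>Im (w - z)\<bar> \<le> \<rho>"
      by (auto simp: in_cbox_complex_iff a1_def a3_def)
    then show "w \<in> cball z (2 * \<rho>)" by (rule sq_bounds)
  qed
  have pi: "path_image (rectpath a1 a3) = cbox a1 a3 - box a1 a3"
    using l by (intro path_image_rectpath_cbox_minus_box) auto
  show pr: "path_image (rectpath a1 a3) \<subseteq> cball z (2 * \<rho>) - ball z \<rho>"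
  proof
    fix w assume w: "w \<in> path_image (rectpath a1 a3)"
    then have "w \<in> cball z (2 * \<rho>)" using cb pi by auto
    moreover have "\<bar>Re (w - z)\<bar> \<ge> \<rho> \<or> \<bar>Im (w - z)\<bar> \<ge> \<rho>"
      using w pi by (auto simp: in_cbox_complex_iff in_box_complex_iff a1_def a3_def)
    then have "cmod (w - z) \<ge> \<rho>" using abs_Re_le_cmod[of "w - z"] abs_Im_le_cmod[of "w - z"] by linarith
    ultimately show "w \<in> cball z (2 * \<rho>) - ball z \<rho>" by (simp add: dist_norm norm_minus_commute)
  qed
  show "path_image (rectpath a1 a3) \<subseteq> - (\<Union>z\<in>P1. ball z \<rho>)"
    using pr cb2_avoid[OF z] by blast
  show "z \<in> box a1 a3" using rho by (simp add: in_box_complex_iff a1_def a3_def)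
  have "a1 \<in> path_image (rectpath a1 a3)" by (metis pathstart_in_path_image pathstart_rectpath)
  then show "a1 \<in> cball z (2 * \<rho>) - ball z \<rho>" using pr by blast
qed

lemma io_small:
  assumes z: "z \<in> P1" "z \<notin> Y" and s: "s \<in> small_loops P1 z"
  shows "io s \<in> Mset Y P2"
proof -
  interpret A: PCT P1 using fin1 bp1 by unfold_locales
  interpret B: PCT P2 using fin2 bp2 by unfold_locales
  obtain \<alpha> r where s: "s = cls P1 (\<alpha> +++ reversepath (circlepath z r) +++ reversepath \<alpha>)"
    and r: "r > 0" "cball z r \<inter> P1 = {z}" and a: "path \<alpha>" "path_image \<alpha> \<subseteq> - P1" "pathstart \<alpha> = bp"
      "pathfinish \<alpha> = z + r"
    using s unfolding small_loops_def cls_def by auto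
  define a1 a3 where "a1 = z - Complex \<rho> \<rho>" and "a3 = z + Complex \<rho> \<rho>"
  note G = rect_geom[OF z(1), folded a1_def a3_def]
  define rr where "rr = reversepath (rectpath a1 a3)"
  define c where "c = reversepath (circlepath z r)"
  define K where "K = cball z (max r (2 * \<rho>))"
  have KP: "K \<inter> P1 = {z}"
    using r(2) cb2_P1[OF z(1)] unfolding K_def by (cases "r \<le> 2 * \<rho>") (auto simp: max_def)
  have Kc: "convex K" "compact K" "z \<in> interior K" using r rho by (auto simp: K_def)
  have zr: "z + of_real r \<in> K" using r by (auto simp: K_def dist_norm)
  have a1K: "a1 \<in> K" using G(7) by (auto simp: K_def)
  define L where "L = linepath (z + of_real r) a1"
  have segK: "closed_segment (z + of_real r) a1 \<subseteq> K"
    using zr a1K Kc(1) by (rule closed_segment_subset)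
  have zL: "z \<notin> closed_segment (z + of_real r) a1"
  proof
    assume "z \<in> closed_segment (z + of_real r) a1"
    then obtain u where u: "0 \<le> u" "u \<le> 1" "z = (1 - u) *\<^sub>R (z + of_real r) + u *\<^sub>R a1"
      by (auto simp: closed_segment_def)
    have "Im z = Im ((1 - u) *\<^sub>R (z + of_real r) + u *\<^sub>R a1)" using arg_cong[OF u(3), of Im] .
    also have "\<dots> = Im z - u * \<rho>" by (simp add: a1_def algebra_simps)
    finally have "u = 0" using rho by simp
    then have "z = z + of_real r" using u(3) by simp
    then show False using r by simp
  qed
  have pL: "path L" "path_image L \<subseteq> K - {z}" "pathstart L = z + of_real r" "pathfinish L = a1"
    using segK zL by (auto simp: L_def)
  have prr: "path rr" "path_image rr \<subseteq> K - {z}" "pathstart rr = a1" "pathfinish rr = a1"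
    using G(4) rho by (auto simp: rr_def K_def)
  have pc: "path c" "path_image c \<subseteq> K - {z}" "pathstart c = z + of_real r" "pathfinish c = z + of_real r"
    using r by (auto simp: c_def K_def)
  define l2 where "l2 = L +++ rr +++ reversepath L"
  have pl2: "path l2" "path_image l2 \<subseteq> K - {z}" "pathstart l2 = z + of_real r" "pathfinish l2 = z + of_real r"
    using pL prr by (auto simp: l2_def path_image_join)
  have wnc: "winding_number c z = -1"
    using winding_number_reversepath[of "circlepath z r" z] winding_number_circlepath_centre[OF r(1)] r
    by (simp add: c_def)
  have wnl2: "winding_number l2 z = -1"
  proof -
    have zn: "z \<notin> path_image L" "z \<notin> path_image rr" using pL prr by auto
    have "winding_number rr z = -1"
      using winding_number_reversepath[of "rectpath a1 a3" z] winding_number_rectpath[OF G(6)] zn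
      by (simp add: rr_def)
    then show ?thesis unfolding l2_def using pL prr zn
      by (simp add: winding_number_join winding_number_reversepath path_image_join)
  qed
  have hK: "homotopic_paths (K - {z}) c l2"
    by (rule OPL[OF Kc]) (use pc pl2 wnc wnl2 in auto)
  have KP': "K - {z} \<subseteq> - P1" using KP by blast
  have pinL: "pin (- P1) L" "pin (- P1) rr" "pin (- P1) c" "pin (- P1) \<alpha>"
    using pL prr pc a KP' by (auto simp: pin_def)
  have PCc: "PC P1 c = PC P1 L \<otimes>\<^bsub>Gpi P1\<^esub> PC P1 rr \<otimes>\<^bsub>Gpi P1\<^esub> inv\<^bsub>Gpi P1\<^esub> (PC P1 L)"
  proof -
    interpret GA: group "Gpi P1" using group_Gpi bp1 .
    have "PC P1 c = PC P1 l2" using A.PC_cong homotopic_paths_subset[OF hK KP'] by blast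
    also have "\<dots> = PC P1 L \<otimes>\<^bsub>Gpi P1\<^esub> (PC P1 rr \<otimes>\<^bsub>Gpi P1\<^esub> PC P1 (reversepath L))"
      unfolding l2_def using pinL pL prr by (simp add: A.PC_join pin_join pin_rev)
    finally show ?thesis using pinL by (simp add: A.PC_rev A.PC_carrier GA.m_assoc)
  qed
  define \<alpha>' where "\<alpha>' = \<alpha> +++ L"
  have pa': "path \<alpha>'" "path_image \<alpha>' \<subseteq> - P1" "pathstart \<alpha>' = bp" "pathfinish \<alpha>' = a1"
    using pinL a pL by (auto simp: \<alpha>'_def pin_def path_image_join)
  have a1B: "a1 \<notin> (\<Union>z\<in>P1. ball z \<rho>)" using G(7) cb2_avoid[OF z(1)] by blast
  obtain \<gamma> where gm: "path \<gamma>" "path_image \<gamma> \<subseteq> - (\<Union>z\<in>P1. ball z \<rho>)" "homotopic_paths (- P1) \<alpha>' \<gamma>"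
    using ball_avoid[OF fin1 sep pa'(1,2)] pa'(3,4) a1B bpB by auto
  have ge: "pathstart \<gamma> = bp" "pathfinish \<gamma> = a1"
    using gm(3) pa' homotopic_paths_imp_pathstart homotopic_paths_imp_pathfinish by metis+
  have "- (\<Union>z\<in>P1. ball z \<rho>) \<subseteq> - P1" using P1sub by (rule Compl_anti_mono)
  then have gP1: "pin (- P1) \<gamma>" using gm by (auto simp: pin_def)
  have "s = PC P1 \<alpha> \<otimes>\<^bsub>Gpi P1\<^esub> PC P1 c \<otimes>\<^bsub>Gpi P1\<^esub> inv\<^bsub>Gpi P1\<^esub> (PC P1 \<alpha>)"
    unfolding s c_def[symmetric] using A.cls_conj[of \<alpha> c] pinL a pc by simp
  also have "\<dots> = PC P1 \<alpha>' \<otimes>\<^bsub>Gpi P1\<^esub> PC P1 rr \<otimes>\<^bsub>Gpi P1\<^esub> inv\<^bsub>Gpi P1\<^esub> (PC P1 \<alpha>')"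
  proof -
    interpret GA: group "Gpi P1" using group_Gpi bp1 .
    have "PC P1 \<alpha>' = PC P1 \<alpha> \<otimes>\<^bsub>Gpi P1\<^esub> PC P1 L"
      unfolding \<alpha>'_def using pinL a pL by (simp add: A.PC_join)
    then show ?thesis unfolding PCc using pinL A.PC_carrier
      by (simp add: GA.m_assoc GA.inv_mult_group)
  qed
  also have "\<dots> = PC P1 \<gamma> \<otimes>\<^bsub>Gpi P1\<^esub> PC P1 rr \<otimes>\<^bsub>Gpi P1\<^esub> inv\<^bsub>Gpi P1\<^esub> (PC P1 \<gamma>)"
    using A.PC_cong[OF gm(3)] by simp
  also have "\<dots> = cls P1 (\<gamma> +++ rr +++ reversepath \<gamma>)"
    using A.cls_conj[of \<gamma> rr] gP1 ge pinL prr by simp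
  finally have s2: "s = cls P1 (\<gamma> +++ rr +++ reversepath \<gamma>)" .
  have rrB: "path_image rr \<subseteq> - (\<Union>z\<in>P1. ball z \<rho>)" using G(5) by (simp add: rr_def)
  have io1: "io s = cls P2 (\<gamma> +++ rr +++ reversepath \<gamma>)"
    unfolding s2 using gm rrB prr ge by (intro io_cls) (auto simp: path_image_join)
  have sub2: "- (\<Union>z\<in>P1. ball z \<rho>) \<subseteq> - P2" using P2sub by (rule Compl_anti_mono)
  have g2: "pin (- P2) \<gamma>" "pin (- P2) rr" using gm rrB prr sub2 by (auto simp: pin_def)
  have r2: "path_image (rectpath a1 a3) \<subseteq> - P2" using G(5) sub2 by blast
  have "cbox a1 a3 \<inter> P2 \<inter> Y = {}" using G(3) Ysep z by blast
  then have M: "PC P2 \<gamma> \<otimes>\<^bsub>Gpi P2\<^esub> inv\<^bsub>Gpi P2\<^esub> (PC P2 (rectpath a1 a3)) \<otimes>\<^bsub>Gpi P2\<^esub> inv\<^bsub>Gpi P2\<^esub> (PC P2 \<gamma>)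
      \<in> Mset Y P2"
    using B.RECT[OF G(1,2) r2 _ g2(1) ge] by blast
  have "io s = PC P2 \<gamma> \<otimes>\<^bsub>Gpi P2\<^esub> PC P2 rr \<otimes>\<^bsub>Gpi P2\<^esub> inv\<^bsub>Gpi P2\<^esub> (PC P2 \<gamma>)"
    unfolding io1 using B.cls_conj[of \<gamma> rr] g2 ge prr by simp
  also have "PC P2 rr = inv\<^bsub>Gpi P2\<^esub> (PC P2 (rectpath a1 a3))"
    unfolding rr_def using r2 by (intro B.PC_rev) (simp add: pin_def)
  finally show ?thesis using M by simp
qed

lemma io_Qset: "x \<in> Qset Y P1 \<Longrightarrow> io x \<in> Mset Y P2"
  unfolding Qset_def using io_one Mset_one io_small by auto

lemma io_Mset: "x \<in> Mset Y P1 \<Longrightarrow> io x \<in> Mset Y P2"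
proof -
  assume "x \<in> Mset Y P1"
  then obtain gs where gs: "set gs \<subseteq> Qset Y P1" "x = foldr (\<lambda>a b. a \<otimes>\<^bsub>Gpi P1\<^esub> b) gs \<one>\<^bsub>Gpi P1\<^esub>"
    by (auto simp: Mset_def)
  have "io x = foldr (\<lambda>a b. a \<otimes>\<^bsub>Gpi P2\<^esub> b) (map io gs) \<one>\<^bsub>Gpi P2\<^esub>"
    unfolding gs(2) using gs(1) Qset_carrier[OF bp1] by (intro io_foldr) blast
  moreover have "foldr (\<lambda>a b. a \<otimes>\<^bsub>Gpi P2\<^esub> b) hs \<one>\<^bsub>Gpi P2\<^esub> \<in> Mset Y P2"
    if "set hs \<subseteq> Mset Y P2" for hs
    using that by (induction hs) (auto simp: Mset_one Mset_mult[OF bp2])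
  moreover have "set (map io gs) \<subseteq> Mset Y P2" using gs(1) io_Qset by auto
  ultimately show ?thesis by simp
qed

end

lemma polyfun_circle: "(\<lambda>p. r - ((fst p - a) * (fst p - a) + (snd p - b) * (snd p - b))) \<in> polyfun"
proof -
  have f: "(\<lambda>p. fst p + (- a)) \<in> polyfun" by (rule polyfun.pf_add[OF polyfun.pf_fst polyfun.pf_const])
  have s: "(\<lambda>p. snd p + (- b)) \<in> polyfun" by (rule polyfun.pf_add[OF polyfun.pf_snd polyfun.pf_const])
  have ff: "(\<lambda>p. (fst p + (- a)) * (fst p + (- a))) \<in> polyfun" by (rule polyfun.pf_mult[OF f f])
  have ss: "(\<lambda>p. (snd p + (- b)) * (snd p + (- b))) \<in> polyfun" by (rule polyfun.pf_mult[OF s s])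
  have sum: "(\<lambda>p. (fst p + (- a)) * (fst p + (- a)) + (snd p + (- b)) * (snd p + (- b))) \<in> polyfun"
    by (rule polyfun.pf_add[OF ff ss])
  have neg: "(\<lambda>p. (-1) * ((fst p + (- a)) * (fst p + (- a)) + (snd p + (- b)) * (snd p + (- b)))) \<in> polyfun"
    by (rule polyfun.pf_mult[OF polyfun.pf_const sum])
  have "(\<lambda>p. r + (-1) * ((fst p + (- a)) * (fst p + (- a)) + (snd p + (- b)) * (snd p + (- b)))) \<in> polyfun"
    by (rule polyfun.pf_add[OF polyfun.pf_const neg])
  moreover have "(\<lambda>p. r + (-1) * ((fst p + (- a)) * (fst p + (- a)) + (snd p + (- b)) * (snd p + (- b))))
     = (\<lambda>p. r - ((fst p - a) * (fst p - a) + (snd p - b) * (snd p - b)))"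
    by (simp add: fun_eq_iff algebra_simps)
  ultimately show ?thesis by simp
qed

lemma semialg_ball: "semialg (ball c r)"
proof -
  define f where "f = (\<lambda>p::real \<times> real. r\<^sup>2 - ((fst p - Re c) * (fst p - Re c) + (snd p - Im c) * (snd p - Im c)))"
  have fp: "f \<in> polyfun" unfolding f_def by (rule polyfun_circle)
  have eq: "ball c r = {z. f (Re z, Im z) > 0 \<and> (\<lambda>p. r) (Re z, Im z) > 0}"
  proof -
    have "dist c z < r \<longleftrightarrow> (Re z - Re c)\<^sup>2 + (Im z - Im c)\<^sup>2 < r\<^sup>2 \<and> r > 0" for z
    proof -
      have "dist c z = sqrt ((Re z - Re c)\<^sup>2 + (Im z - Im c)\<^sup>2)"
        by (simp add: dist_norm cmod_def power2_commute)
      moreover have "sqrt S < r \<longleftrightarrow> S < r\<^sup>2 \<and> r > 0" if "S \<ge> 0" for S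
      proof (cases "r > 0")
        case True
        then have "sqrt S < r \<longleftrightarrow> sqrt S < sqrt (r\<^sup>2)" by simp
        also have "\<dots> \<longleftrightarrow> S < r\<^sup>2" by (rule real_sqrt_less_iff)
        finally show ?thesis using True by simp
      next
        case False
        have "\<not> sqrt S < r" using False real_sqrt_ge_zero[OF that] by linarith
        then show ?thesis using False by simp
      qed
      ultimately show ?thesis by simp
    qed
    then show ?thesis by (auto simp: f_def power2_eq_square)
  qed
  have "basic_semialg (ball c r)"
    unfolding basic_semialg_def
    apply (rule exI[of _ "{}"], rule exI[of _ "{}"], rule exI[of _ "{f, \<lambda>p. r}"])
    using fp polyfun.pf_const[of r] eq by auto
  then show ?thesis unfolding semialg_def by (intro exI[of _ "{ball c r}"]) auto
qed

lemma choose_rho: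
  assumes fin: "finite P" and bp: "bp \<notin> P" and W: "\<forall>z\<in>P. open (W z) \<and> z \<in> W z"
  obtains \<rho> where "sep P \<rho>" "\<forall>z\<in>P. cball z (2 * \<rho>) \<subseteq> W z" "\<forall>z\<in>P. bp \<notin> cball z (2 * \<rho>)"
proof -
  have "\<forall>z\<in>P. \<exists>e>0. cball z e \<subseteq> W z \<inter> - {bp}"
  proof
    fix z assume z: "z \<in> P"
    then have "open (W z \<inter> - {bp})" "z \<in> W z \<inter> - {bp}" using W bp by auto
    then show "\<exists>e>0. cball z e \<subseteq> W z \<inter> - {bp}" using open_contains_cball by blast
  qed
  then obtain e where e: "\<And>z. z \<in> P \<Longrightarrow> e z > 0 \<and> cball z (e z) \<subseteq> W z \<inter> - {bp}"
    by metis
  define D where "D = {1} \<union> (\<lambda>z. e z / 2) ` P \<union> (\<lambda>(z, z'). dist z z' / 5) ` {(z, z'). z \<in> P \<and> z' \<in> P \<and> z \<noteq> z'}"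
  have finD: "finite D" unfolding D_def using fin
    by (intro finite_UnI finite_imageI) (auto intro: finite_subset[of _ "P \<times> P"])
  have pos: "\<forall>d\<in>D. d > 0" unfolding D_def using e by auto
  define \<rho> where "\<rho> = Min D"
  have \<rho>pos: "\<rho> > 0" unfolding \<rho>_def using finD pos by (simp add: D_def)
  have le: "\<rho> \<le> d" if "d \<in> D" for d unfolding \<rho>_def using finD that by simp
  have "sep P \<rho>"
  proof -
    have "dist z z' > 4 * \<rho>" if "z \<in> P" "z' \<in> P" "z \<noteq> z'" for z z'
    proof -
      have "dist z z' / 5 \<in> D" unfolding D_def using that by force
      then have "\<rho> \<le> dist z z' / 5" by (rule le)
      then show ?thesis using \<rho>pos by linarith
    qed
    then show ?thesis using \<rho>pos by (auto simp: sep_def)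
  qed
  moreover have "cball z (2 * \<rho>) \<subseteq> W z \<inter> - {bp}" if "z \<in> P" for z
  proof -
    have "e z / 2 \<in> D" unfolding D_def using that by auto
    then have "2 * \<rho> \<le> e z" using le by fastforce
    then have "cball z (2 * \<rho>) \<subseteq> cball z (e z)" by auto
    then show ?thesis using e[OF that] by blast
  qed
  ultimately show ?thesis using that by blast
qed

lemma adapted_balls:
  assumes s: "sep P \<rho>" and bpc: "\<forall>z\<in>P. bp \<notin> cball z (2 * \<rho>)"
    and Ys: "\<forall>z\<in>P. z \<notin> Y \<longrightarrow> cball z (2 * \<rho>) \<inter> Y = {}"
  shows "adapted Y P (\<lambda>z. ball z \<rho>)"
proof -
  have \<rho>: "\<rho> > 0" using s by (simp add: sep_def)
  have a: "adm P (\<lambda>z. ball z \<rho>)" using sep_adm[OF s] .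
  show ?thesis unfolding adapted_def
  proof (intro ballI conjI impI)
    fix z assume z: "z \<in> P"
    show "convex (ball z \<rho>)" "open (ball z \<rho>)" "semialg (ball z \<rho>)" by (auto simp: semialg_ball)
    show "compact (closure (ball z \<rho>))" by simp
    show "bp \<notin> closure (ball z \<rho>)" using bpc z \<rho> by auto
    show "ball z \<rho> \<inter> P = {z}" using a z unfolding adm_def by blast
    show "closure (ball z \<rho>) \<inter> Y = {}" if "z \<notin> Y"
    proof -
      have "closure (ball z \<rho>) \<subseteq> cball z (2 * \<rho>)" using \<rho> by auto
      then show ?thesis using Ys z that by blast
    qed
    fix z' assume "z' \<in> P" "z' \<noteq> z"
    then show "closure (ball z \<rho>) \<inter> closure (ball z' \<rho>) = {}" using a z unfolding adm_def by blast
  qed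
qed

lemma choose_balls:
  assumes fin: "finite P" and PX: "P \<subseteq> X" and Xu: "X \<subseteq> upper_half" and Z: "closedin (top_of_set X) Z"
    and W: "\<forall>z\<in>P. open (W z) \<and> z \<in> W z"
  obtains \<rho> where "sep P \<rho>" "\<forall>z\<in>P. cball z (2 * \<rho>) \<subseteq> W z" "\<forall>z\<in>P. bp \<notin> cball z (2 * \<rho>)"
    "\<forall>z\<in>P. z \<notin> Z \<longrightarrow> cball z (2 * \<rho>) \<inter> Z = {}" "adapted Z P (\<lambda>z. ball z \<rho>)"
proof -
  obtain C where C: "closed C" "Z = X \<inter> C" using Z closedin_closed by metis
  define W' where "W' z = W z \<inter> (if z \<in> Z then UNIV else - C)" for z
  have W': "\<forall>z\<in>P. open (W' z) \<and> z \<in> W' z"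
    using W C PX by (auto simp: W'_def open_Compl)
  have bp: "bp \<notin> P" using bp_notin_sub[OF Xu PX] .
  obtain \<rho> where r: "sep P \<rho>" "\<forall>z\<in>P. cball z (2 * \<rho>) \<subseteq> W' z" "\<forall>z\<in>P. bp \<notin> cball z (2 * \<rho>)"
    using choose_rho[OF fin bp W'] by blast
  have r2: "\<forall>z\<in>P. cball z (2 * \<rho>) \<subseteq> W z" using r(2) by (auto simp: W'_def)
  have r4: "\<forall>z\<in>P. z \<notin> Z \<longrightarrow> cball z (2 * \<rho>) \<inter> Z = {}"
  proof (intro ballI impI)
    fix z assume z: "z \<in> P" "z \<notin> Z"
    then have "W' z = W z \<inter> - C" by (simp add: W'_def)
    then have "cball z (2 * \<rho>) \<subseteq> - C" using r(2) z by blast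
    then show "cball z (2 * \<rho>) \<inter> Z = {}" using C by blast
  qed
  show ?thesis using that r r2 r4 adapted_balls[OF r(1) r(3) r4] by blast
qed

lemma iota_empty: "iota U P P' {} = {}"
  by (simp add: iota_def)

lemma cls_nonempty: "x \<in> carrier (Gpi P) \<Longrightarrow> x \<noteq> {}"
proof -
  assume "x \<in> carrier (Gpi P)"
  then obtain g where "x = cls P g" "loopat P g" by (auto simp: carrier_Gpi)
  then have "g \<in> x" using self_mem_cls by (auto simp: loopat_def)
  then show ?thesis by blast
qed

lemma iota_dich:
  assumes fin: "finite P" and adm: "adm P U" and P': "P' \<subseteq> \<Union>(U ` P)" and bpU: "bp \<notin> \<Union>(U ` P)"
    and x: "x \<in> carrier (Gpi P)"
  shows "iota U P P' x = {} \<or> iota U P P' x \<in> carrier (Gpi P')"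
proof (cases "\<exists>g\<in>x. path_image g \<subseteq> - \<Union>(U ` P)")
  case False then show ?thesis by (auto simp: iota_def)
next
  case True
  then obtain g where g: "g \<in> x" "path_image g \<subseteq> - \<Union>(U ` P)" by blast
  obtain g0 where g0: "x = cls P g0" "loopat P g0" using x by (auto simp: carrier_Gpi)
  have h: "homotopic_paths (- P) g0 g" using g(1) g0(1) by (simp add: cls_def)
  have xg: "x = cls P g" using g0(1) cls_eqI[OF h] by simp
  have pg: "path g" using h homotopic_paths_imp_path by blast
  have lg: "loopat P' g" using g0(2) h g(2) P' pg homotopic_paths_imp_pathstart homotopic_paths_imp_pathfinish
    unfolding loopat_def by fastforce
  have "iota U P P' x = cls P' g" by (rule iota_cls[OF fin adm P' pg g(2) xg])
  then show ?thesis using lg by (auto simp: carrier_Gpi)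
qed

lemma mem_nbhd:
  "(P', \<psi>', \<phi>') \<in> normal_nbhd X Z G (P, \<psi>, \<phi>) U \<longleftrightarrow>
     (P', \<psi>', \<phi>') \<in> Hur X Z G \<and> P' \<subseteq> \<Union>(U ` P) \<and> (\<forall>z \<in> P. P' \<inter> U z \<noteq> {}) \<and>
        (\<forall>x \<in> carrier (Gpi P). \<phi>' (iota U P P' x) = \<phi> x) \<and>
        (\<forall>x \<in> Qset Z P. psi_ext G Z P' \<psi>' (iota U P P' x) = \<psi> x)"
  by (simp add: normal_nbhd_def)

lemma adapted_bp: "adapted Z P U \<Longrightarrow> bp \<notin> \<Union>(U ` P)"
  unfolding adapted_def using closure_subset by blast

lemma adapted_disj: "adapted Z P U \<Longrightarrow> z \<in> P \<Longrightarrow> z' \<in> P \<Longrightarrow> w \<in> U z \<Longrightarrow> w \<in> U z' \<Longrightarrow> z = z'"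
  unfolding adapted_def using closure_subset by blast

lemma nbhd_transfer:
  assumes Xu: "X \<subseteq> upper_half" and G: "group G"
    and c: "(P, \<psi>, \<phi>) \<in> Hur X Z G" and U: "adapted Z P U"
    and c1: "(P1, \<psi>1, \<phi>1) \<in> normal_nbhd X Z G (P, \<psi>, \<phi>) U"
    and BS: "BallSit P1 P2 \<rho> Z"
    and sub: "\<forall>z\<in>P. \<forall>z1\<in>P1. z1 \<in> U z \<longrightarrow> ball z1 \<rho> \<subseteq> U z"
    and c2: "(P2, \<psi>2, \<phi>2) \<in> Hur X Z G" and meet: "\<forall>z1\<in>P1. P2 \<inter> ball z1 \<rho> \<noteq> {}"
    and phi: "\<forall>y\<in>carrier (Gpi P1). \<phi>2 (iota (\<lambda>z. ball z \<rho>) P1 P2 y) = \<phi>1 y"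
  shows "(P2, \<psi>2, \<phi>2) \<in> normal_nbhd X Z G (P, \<psi>, \<phi>) U"
proof -
  interpret BallSit P1 P2 \<rho> Z by fact
  note n1 = c1[unfolded mem_nbhd]
  note h = Hur_memD[OF c] and h1 = Hur_memD[OF n1[THEN conjunct1]]
  note h2 = Hur_memD[OF c2]
  have bpP: "bp \<notin> P" using bp_notin_sub[OF Xu h(2)] .
  have bp2': "bp \<notin> P2" using bp_notin_sub[OF Xu h2(2)] .
  have P1U: "P1 \<subseteq> \<Union>(U ` P)" using n1 by blast
  have BU: "\<Union>((\<lambda>z. ball z \<rho>) ` P1) \<subseteq> \<Union>(U ` P)" using P1U sub by blast
  have P2U: "P2 \<subseteq> \<Union>(U ` P)" using P2sub BU by blast
  have meetU: "\<forall>z\<in>P. P2 \<inter> U z \<noteq> {}"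
  proof
    fix z assume z: "z \<in> P"
    then obtain z1 where z1: "z1 \<in> P1" "z1 \<in> U z" using n1 by blast
    then have "ball z1 \<rho> \<subseteq> U z" using sub z by blast
    then show "P2 \<inter> U z \<noteq> {}" using meet z1 by blast
  qed
  have comp: "iota U P P2 x = io (iota U P P1 x)" for x
    unfolding io_def by (rule iota_comp[OF fin1 admB P1U BU P2sub])
  have admU: "adm P U" using adapted_adm[OF U] .
  have phiok: "\<phi>2 (iota U P P2 x) = \<phi> x" if x: "x \<in> carrier (Gpi P)" for x
  proof -
    have d: "iota U P P1 x = {} \<or> iota U P P1 x \<in> carrier (Gpi P1)"
      by (rule iota_dich[OF h(1) admU P1U adapted_bp[OF U] x])
    have e1: "\<phi>1 (iota U P P1 x) = \<phi> x" using n1 x by blast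
    show ?thesis
    proof (cases "iota U P P1 x = {}")
      case True
      have "io {} = {}" by (simp add: io_def iota_empty)
      moreover have "\<phi>2 {} = undefined" using h2(4) cls_nonempty[of "{}" P2] by (auto simp: extensional_def)
      moreover have "\<phi>1 {} = undefined" using h1(4) cls_nonempty[of "{}" P1] by (auto simp: extensional_def)
      ultimately show ?thesis using comp[of x] e1 True by simp
    next
      case False
      then have "iota U P P1 x \<in> carrier (Gpi P1)" using d by blast
      then show ?thesis using comp[of x] e1 phi unfolding io_def by simp
    qed
  qed
  have psiok: "psi_ext G Z P2 \<psi>2 (iota U P P2 x) = \<psi> x" if x: "x \<in> Qset Z P" for x
  proof -
    have xc: "x \<in> carrier (Gpi P)" using x Qset_carrier[OF bpP] by blast
    have e2: "psi_ext G Z P2 \<psi>2 (iota U P P2 x)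
        = (if iota U P P2 x \<in> Mset Z P2 then \<phi>2 (iota U P P2 x) else (SOME x. False))"
      by (rule psi_ext_eq[OF bp2' G h2(3) h2(8)])
    have e1: "(if iota U P P1 x \<in> Mset Z P1 then \<phi>1 (iota U P P1 x) else (SOME x. False)) = \<psi> x"
      using n1 x psi_ext_eq[OF bp1 G h1(3) h1(8)] by metis
    show ?thesis
    proof (cases "iota U P P2 x \<in> Mset Z P2")
      case True
      then show ?thesis using e2 phiok[OF xc] h(8) x by simp
    next
      case False
      have "iota U P P1 x \<notin> Mset Z P1"
      proof
        assume "iota U P P1 x \<in> Mset Z P1"
        then have "io (iota U P P1 x) \<in> Mset Z P2" by (rule io_Mset)
        then show False using False comp[of x] by simp
      qed
      then show ?thesis using e1 e2 False by simp
    qed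
  qed
  show ?thesis unfolding mem_nbhd using c2 P2U meetU phiok psiok by blast
qed

lemma self_mem_nbhd:
  assumes Xu: "X \<subseteq> upper_half" and G: "group G"
    and c: "(P, \<psi>, \<phi>) \<in> Hur X Z G" and BS: "BallSit P P \<rho> Z"
  shows "(P, \<psi>, \<phi>) \<in> normal_nbhd X Z G (P, \<psi>, \<phi>) (\<lambda>z. ball z \<rho>)"
proof -
  interpret BallSit P P \<rho> Z by fact
  note h = Hur_memD[OF c]
  have ioid: "io x = x" if xc: "x \<in> carrier (Gpi P)" for x
  proof -
    obtain g where g: "loopat P g" "path_image g \<subseteq> - (\<Union>z\<in>P. ball z \<rho>)" "x = cls P g"
      using rep_avoid[OF xc] by blast
    then show ?thesis using io_cls[of g] by (simp add: loopat_def)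
  qed
  have "(\<forall>z \<in> P. P \<inter> ball z \<rho> \<noteq> {})" using rho by auto
  moreover have "\<forall>x \<in> carrier (Gpi P). \<phi> (iota (\<lambda>z. ball z \<rho>) P P x) = \<phi> x"
    using ioid unfolding io_def by simp
  moreover have "\<forall>x \<in> Qset Z P. psi_ext G Z P \<psi> (iota (\<lambda>z. ball z \<rho>) P P x) = \<psi> x"
  proof
    fix x assume x: "x \<in> Qset Z P"
    have xc: "x \<in> carrier (Gpi P)" using x Qset_carrier[OF bp1] by blast
    have "x \<in> Mset Z P" using Mset_single[OF bp1 x] .
    then show "psi_ext G Z P \<psi> (iota (\<lambda>z. ball z \<rho>) P P x) = \<psi> x"
      using ioid[OF xc] psi_ext_eq[OF bp1 G h(3) h(8)] h(8) x unfolding io_def by simp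
  qed
  ultimately show ?thesis unfolding mem_nbhd using c P1sub by blast
qed

lemma BallSit_self:
  assumes "finite P" "sep P \<rho>" "\<forall>z\<in>P. bp \<notin> cball z (2 * \<rho>)"
    "\<forall>z\<in>P. z \<notin> Z \<longrightarrow> cball z (2 * \<rho>) \<inter> Z = {}"
  shows "BallSit P P \<rho> Z"
proof -
  have "\<rho> > 0" using assms(2) by (simp add: sep_def)
  then have "P \<subseteq> (\<Union>z\<in>P. ball z \<rho>)" by auto
  then show ?thesis using assms by unfold_locales auto
qed

lemma topspace_Hur:
  assumes Xu: "X \<subseteq> upper_half" and G: "group G" and Z: "closedin (top_of_set X) Z"
  shows "topspace (Hur_top X Z G) = Hur X Z G"
proof
  show "topspace (Hur_top X Z G) \<subseteq> Hur X Z G"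
    unfolding Hur_top_def topology_generated_by_topspace
    by (auto simp: normal_nbhd_def split: prod.splits)
  show "Hur X Z G \<subseteq> topspace (Hur_top X Z G)"
  proof
    fix c assume c: "c \<in> Hur X Z G"
    obtain P \<psi> \<phi> where cc: "c = (P, \<psi>, \<phi>)" by (cases c) auto
    note h = Hur_memD[OF c[unfolded cc]]
    obtain \<rho> where r: "sep P \<rho>" "\<forall>z\<in>P. bp \<notin> cball z (2 * \<rho>)"
      "\<forall>z\<in>P. z \<notin> Z \<longrightarrow> cball z (2 * \<rho>) \<inter> Z = {}" "adapted Z P (\<lambda>z. ball z \<rho>)"
      using choose_balls[OF h(1) h(2) Xu Z, of "\<lambda>z. UNIV"] by auto
    have "c \<in> normal_nbhd X Z G c (\<lambda>z. ball z \<rho>)"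
      unfolding cc by (rule self_mem_nbhd[OF Xu G c[unfolded cc] BallSit_self[OF h(1) r(1-3)]])
    then show "c \<in> topspace (Hur_top X Z G)"
      unfolding Hur_top_def topology_generated_by_topspace using c r(4) cc by force
  qed
qed

lemma cont_generic:
  assumes Xu: "X \<subseteq> upper_half" and G: "group G" and Yc: "closedin (top_of_set X) Y"
    and Z1: "Z1 = X \<or> Z1 = Y" and Z2: "Z2 = X \<or> Z2 = Y"
    and fin: "\<forall>c\<in>Hur X Z1 G. f c \<in> Hur X Z2 G"
    and fshape: "\<And>P \<psi> \<phi>. \<exists>\<psi>'. f (P, \<psi>, \<phi>) = (P, \<psi>', \<phi>)"
  shows "continuous_map (Hur_top X Z1 G) (Hur_top X Z2 G) f"
proof -
  have Xc: "closedin (top_of_set X) X" by simp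
  have Z1c: "closedin (top_of_set X) Z1" using Z1 Xc Yc by blast
  have Z2c: "closedin (top_of_set X) Z2" using Z2 Xc Yc by blast
  define B2 where "B2 = {normal_nbhd X Z2 G c U | c U. c \<in> Hur X Z2 G \<and> adapted Z2 (fst c) U}"
  have T2: "Hur_top X Z2 G = topology_generated_by B2" by (simp add: Hur_top_def B2_def)
  have top1: "topspace (Hur_top X Z1 G) = Hur X Z1 G" using topspace_Hur[OF Xu G Z1c] .
  have top2: "\<Union>B2 = Hur X Z2 G" using topspace_Hur[OF Xu G Z2c] T2 by simp
  show ?thesis unfolding T2
  proof (rule continuous_on_generated_topo)
    show "f ` topspace (Hur_top X Z1 G) \<subseteq> \<Union>B2" using fin top1 top2 by auto
    fix N assume "N \<in> B2"
    then obtain c U where N: "N = normal_nbhd X Z2 G c U" and c: "c \<in> Hur X Z2 G" and U: "adapted Z2 (fst c) U"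
      unfolding B2_def by blast
    obtain P \<psi> \<phi> where cc: "c = (P, \<psi>, \<phi>)" by (cases c) auto
    note U = U[unfolded cc fst_conv]
    note c = c[unfolded cc]
    show "openin (Hur_top X Z1 G) (f -` N \<inter> topspace (Hur_top X Z1 G))"
    proof (subst openin_subopen, intro ballI)
      fix c1 assume c1: "c1 \<in> f -` N \<inter> topspace (Hur_top X Z1 G)"
      obtain P1 \<psi>1 \<phi>1 where cc1: "c1 = (P1, \<psi>1, \<phi>1)" by (cases c1) auto
      have c1H: "(P1, \<psi>1, \<phi>1) \<in> Hur X Z1 G" using c1 top1 cc1 by auto
      note h1 = Hur_memD[OF c1H]
      obtain \<psi>1' where f1: "f (P1, \<psi>1, \<phi>1) = (P1, \<psi>1', \<phi>1)" using fshape by blast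
      have f1N: "(P1, \<psi>1', \<phi>1) \<in> normal_nbhd X Z2 G (P, \<psi>, \<phi>) U"
        using c1 cc1 f1 N cc by auto
      have P1U: "P1 \<subseteq> \<Union>(U ` P)" using f1N unfolding mem_nbhd by blast
      define W where "W z1 = U (SOME z. z \<in> P \<and> z1 \<in> U z)" for z1
      have Wz: "(SOME z. z \<in> P \<and> z1 \<in> U z) \<in> P \<and> z1 \<in> W z1" if "z1 \<in> P1" for z1
      proof -
        have "\<exists>z. z \<in> P \<and> z1 \<in> U z" using P1U that by blast
        then show ?thesis unfolding W_def by (rule someI_ex)
      qed
      have W: "\<forall>z1\<in>P1. open (W z1) \<and> z1 \<in> W z1"
        using Wz U unfolding W_def adapted_def by blast
      obtain \<rho> where r: "sep P1 \<rho>" "\<forall>z\<in>P1. cball z (2 * \<rho>) \<subseteq> W z" "\<forall>z\<in>P1. bp \<notin> cball z (2 * \<rho>)"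
        "\<forall>z\<in>P1. z \<notin> Y \<longrightarrow> cball z (2 * \<rho>) \<inter> Y = {}" "adapted Y P1 (\<lambda>z. ball z \<rho>)"
        using choose_balls[OF h1(1) h1(2) Xu Yc W] by blast
      have rZ: "\<forall>z\<in>P1. z \<notin> Z \<longrightarrow> cball z (2 * \<rho>) \<inter> Z = {}" if "Z = X \<or> Z = Y" for Z
        using that r(4) h1(2) by auto
      have ad1: "adapted Z1 P1 (\<lambda>z. ball z \<rho>)" using adapted_balls[OF r(1) r(3) rZ[OF Z1]] .
      define T' where "T' = normal_nbhd X Z1 G c1 (\<lambda>z. ball z \<rho>)"
      have oT: "openin (Hur_top X Z1 G) T'"
        unfolding T'_def Hur_top_def using c1H ad1 cc1
        by (intro topology_generated_by_Basis) force
      have inT: "c1 \<in> T'"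
        unfolding T'_def cc1 by (rule self_mem_nbhd[OF Xu G c1H BallSit_self[OF h1(1) r(1) r(3) rZ[OF Z1]]])
      have sub: "\<forall>z\<in>P. \<forall>z1\<in>P1. z1 \<in> U z \<longrightarrow> ball z1 \<rho> \<subseteq> U z"
      proof (intro ballI impI)
        fix z z1 assume z: "z \<in> P" "z1 \<in> P1" "z1 \<in> U z"
        have "(SOME z. z \<in> P \<and> z1 \<in> U z) = z"
          using Wz[OF z(2)] adapted_disj[OF U _ z(1) _ z(3)] unfolding W_def by blast
        then have "W z1 = U z" by (simp add: W_def)
        moreover have "ball z1 \<rho> \<subseteq> cball z1 (2 * \<rho>)" using r(1) by (auto simp: sep_def)
        ultimately show "ball z1 \<rho> \<subseteq> U z" using r(2) z(2) by blast
      qed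
      have "T' \<subseteq> f -` N \<inter> topspace (Hur_top X Z1 G)"
      proof
        fix c2 assume c2: "c2 \<in> T'"
        obtain P2 \<psi>2 \<phi>2 where cc2: "c2 = (P2, \<psi>2, \<phi>2)" by (cases c2) auto
        note n2 = c2[unfolded T'_def cc2 cc1 mem_nbhd]
        have c2H: "(P2, \<psi>2, \<phi>2) \<in> Hur X Z1 G" using n2 by blast
        obtain \<psi>2' where f2: "f (P2, \<psi>2, \<phi>2) = (P2, \<psi>2', \<phi>2)" using fshape by blast
        have f2H: "(P2, \<psi>2', \<phi>2) \<in> Hur X Z2 G" using fin c2H f2 by metis
        have BS: "BallSit P1 P2 \<rho> Z2"
          using h1(1) Hur_memD(1)[OF c2H] r(1) r(3) rZ[OF Z2] n2 by unfold_locales auto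
        have meet: "\<forall>z1\<in>P1. P2 \<inter> ball z1 \<rho> \<noteq> {}" using n2 by blast
        have phi: "\<forall>y\<in>carrier (Gpi P1). \<phi>2 (iota (\<lambda>z. ball z \<rho>) P1 P2 y) = \<phi>1 y" using n2 by blast
        have "(P2, \<psi>2', \<phi>2) \<in> normal_nbhd X Z2 G (P, \<psi>, \<phi>) U"
          by (rule nbhd_transfer[OF Xu G c U f1N BS sub f2H meet phi])
        then show "c2 \<in> f -` N \<inter> topspace (Hur_top X Z1 G)"
          using N cc cc2 f2 c2H top1 by auto
      qed
      then show "\<exists>T. openin (Hur_top X Z1 G) T \<and> c1 \<in> T \<and> T \<subseteq> f -` N \<inter> topspace (Hur_top X Z1 G)"
        using oT inT by blast
    qed
  qed
qed

theorem lemma5p4: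
  fixes X Y :: "complex set" and G :: "('g, 'b) monoid_scheme"
  assumes "nice_couple X Y" and "group G"
  shows "nc_morphism X Y X X (\<lambda>z. z)
       \<and> homeomorphic_map (Hur_top X Y G) (Hur_top X X G)
           (\<lambda>(P, \<psi>, \<phi>). (P, restrict \<psi> (Qset X P), \<phi>))"
proof
  show "nc_morphism X Y X X (\<lambda>z. z)" using nc_morphism_id[OF assms(1)] .
  have Xu: "X \<subseteq> upper_half" and Yc: "closedin (top_of_set X) Y"
    using assms(1) by (auto simp: nice_couple_def)
  have Xc: "closedin (top_of_set X) X" by simp
  have eqF: "(\<lambda>(P, \<psi>, \<phi>). (P, restrict \<psi> (Qset X P), \<phi>)) = (Fm X :: 'g config \<Rightarrow> 'g config)"
    by (simp add: Fm_def)
  have cF: "continuous_map (Hur_top X Y G) (Hur_top X X G) (Fm X)"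
  proof (rule cont_generic[OF Xu assms(2) Yc])
    show "\<forall>c\<in>Hur X Y G. Fm X c \<in> Hur X X G" using Fm_in[OF Xu assms(2)] by blast
    show "\<exists>\<psi>'. Fm X (P, \<psi>, \<phi>) = (P, \<psi>', \<phi>)" for P \<psi> \<phi> by (simp add: Fm_def)
  qed auto
  have cG: "continuous_map (Hur_top X X G) (Hur_top X Y G) (Gm Y)"
  proof (rule cont_generic[OF Xu assms(2) Yc])
    show "\<forall>c\<in>Hur X X G. Gm Y c \<in> Hur X Y G" using Gm_in[OF Xu assms(2)] by blast
    show "\<exists>\<psi>'. Gm Y (P, \<psi>, \<phi>) = (P, \<psi>', \<phi>)" for P \<psi> \<phi> by (simp add: Gm_def)
  qed auto
  have "homeomorphic_maps (Hur_top X Y G) (Hur_top X X G) (Fm X) (Gm Y)"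
    unfolding homeomorphic_maps_def
    using cF cG topspace_Hur[OF Xu assms(2) Yc] topspace_Hur[OF Xu assms(2) Xc]
      Gm_Fm[OF Xu] Fm_Gm[OF Xu] by auto
  then show "homeomorphic_map (Hur_top X Y G) (Hur_top X X G)
           (\<lambda>(P, \<psi>, \<phi>). (P, restrict \<psi> (Qset X P), \<phi>))"
    unfolding eqF homeomorphic_map_maps by blast
qed

end
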